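(* In the setting described in the context, there exist functions $F_1,\dots,F_n$ of the $n-2$ variables $$z^j=\frac{u^{j+2}-\delta_j\,u^1}{u^2},\qquad j\in\{1,\dots,n-2\},$$ where $\delta_j=1$ if $j+2=1(\alpha)$ for some $\alpha\in\{2,\dots,r\}$ and $\delta_j=0$ otherwise, such that $$\overline{\eta}_i=(u^2)^{-d}F_i(z^1,\dots,z^{n-2}),\qquad i\in\{1,\dots,n\}.$$ Moreover there exist a function $f(z^1,\dots,z^{n-2})$ and constants $C_1,C_2$ such that $$F_1=-\sum_{\alpha=2}^r\partial_{z^{1(\alpha)-2}}f+C_1,\qquad F_2=-\sum_{j=1}^{n-2}z^j\,\partial_{z^j}f-(d-1)f+C_2,\qquad F_j=\partial_{z^{j-2}}f\ \ (j\in\{3,\dots,n\}).$$ In particular $\sum_{\alpha=1}^rF_{1(\alpha)}=C_1$ is constant, and $C_1=0$ whenever $d\neq0$.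
   Context: A Dubrovin–Frobenius manifold is an $n$-dimensional manifold $M$ (smooth real, or complex with all data holomorphic) with a flat (pseudo-)Riemannian metric $\eta$ with Levi-Civita connection $\nabla$, a commutative associative product $\circ$ on $TM$ with structure constants $c^i_{jk}$ and unit vector field $e$, and a vector field $E$ (Euler field) such that: $\eta_{il}c^l_{jk}=\eta_{jl}c^l_{ik}$; $\nabla_ic^l_{jk}=\nabla_jc^l_{ik}$; $\nabla e=0$; $\mathcal{L}_Ec^i_{jk}=c^i_{jk}$, $\mathcal{L}_Ee=-e$, $\mathcal{L}_E\eta=(2-d)\eta$ for some constant $d$. $M$ is regular near a point if each Jordan block of the operator $L=E\circ$ corresponds to a different eigenvalue. Standing setting: $M$ is regular and non-semisimple near a point, $L$ has $r$ Jordan blocks of sizes $m_1,\dots,m_r$ with $m_1\ge2$, and one uses the index notation $j(\alpha)=m_1+\dots+m_{\alpha-1}+j$ for $\alpha\in\{1,\dots,r\}$, $j\in\{1,\dots,m_\alpha\}$ (so $j(1)=j$). One works in local (David–Hertling) coordinates $u^1,\dots,u^n$ in which $\partial_{i(\alpha)}\circ\partial_{j(\beta)}=\delta_{\alpha\beta}\partial_{(i+j-1)(\alpha)}$ if $i+j\le m_\alpha+1$ and $=0$ if $i+j\ge m_\alpha+2$; $e=\sum_{\alpha=1}^r\partial_{1(\alpha)}$; $E=\sum_{s=1}^nu^s\partial_s$; and the metric has the block-Hankel form $\eta=\sum_{\alpha}\sum_{i,j=1}^{m_\alpha}\overline{\eta}_{(i+j-1)(\alpha)}\,du^{i(\alpha)}\otimes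 du^{j(\alpha)}$ for functions $\overline{\eta}_{k(\alpha)}$, with $\overline{\eta}_{k(\alpha)}=0$ for $k\ge m_\alpha+1$. Here $\overline{\eta}_i$, $i\in\{1,\dots,n\}$, denotes $\overline{\eta}_{k(\alpha)}$ with $i=k(\alpha)$. *)

theory Defs
  imports "HOL-Analysis.Analysis"
begin

text \<open>Local coordinates: points are vectors u :: real^'n; the coordinate labels
 1..n (n = CARD('n)) are attached to the components by a bijection ix :: nat => 'n,
 so u^i = u $ ix i.\<close>

definition pdv :: "'n::finite \<Rightarrow> (real^'n \<Rightarrow> real) \<Rightarrow> real^'n \<Rightarrow> real" where
  "pdv k h u = deriv (\<lambda>t. h (u + t *\<^sub>R axis k 1)) 0"

text \<open>Smooth (C-infinity) on an open set: all iterated partial derivatives exist and are continuous.\<close>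
definition smooth_on :: "(real^'n::finite) set \<Rightarrow> (real^'n \<Rightarrow> real) \<Rightarrow> bool" where
  "smooth_on U h \<longleftrightarrow> (\<exists>S. h \<in> S \<and> (\<forall>g\<in>S. continuous_on U g \<and>
      (\<forall>k. \<forall>u\<in>U. (\<lambda>t. g (u + t *\<^sub>R axis k 1)) differentiable (at 0)) \<and>
      (\<forall>k. (\<lambda>u. pdv k g u) \<in> S)))"

definition cpd :: "(nat \<Rightarrow> 'n::finite) \<Rightarrow> nat \<Rightarrow> (real^'n \<Rightarrow> real) \<Rightarrow> real^'n \<Rightarrow> real" where
  "cpd ix i h = pdv (ix i) h"

text \<open>Tensor fields in coordinates: functions of (nat) indices in {1..n} and the point.\<close>

definition metric_matrix :: "(nat \<Rightarrow> 'n::finite) \<Rightarrow> (nat \<Rightarrow> nat \<Rightarrow> real^'n \<Rightarrow> real) \<Rightarrow> real^'n \<Rightarrow> real^'n^'n" where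
  "metric_matrix ix g u = (\<chi> k l. g (inv_into {1..CARD('n)} ix k) (inv_into {1..CARD('n)} ix l) u)"

definition inv_metric :: "(nat \<Rightarrow> 'n::finite) \<Rightarrow> (nat \<Rightarrow> nat \<Rightarrow> real^'n \<Rightarrow> real) \<Rightarrow> nat \<Rightarrow> nat \<Rightarrow> real^'n \<Rightarrow> real" where
  "inv_metric ix g i j u = matrix_inv (metric_matrix ix g u) $ ix i $ ix j"

definition christoffel :: "(nat \<Rightarrow> 'n::finite) \<Rightarrow> (nat \<Rightarrow> nat \<Rightarrow> real^'n \<Rightarrow> real) \<Rightarrow> nat \<Rightarrow> nat \<Rightarrow> nat \<Rightarrow> real^'n \<Rightarrow> real" where
  "christoffel ix g k i j u = (1/2) * (\<Sum>l\<in>{1..CARD('n)}. inv_metric ix g k l u *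
      (cpd ix i (g j l) u + cpd ix j (g i l) u - cpd ix l (g i j) u))"

definition riemann :: "(nat \<Rightarrow> 'n::finite) \<Rightarrow> (nat \<Rightarrow> nat \<Rightarrow> real^'n \<Rightarrow> real) \<Rightarrow> nat \<Rightarrow> nat \<Rightarrow> nat \<Rightarrow> nat \<Rightarrow> real^'n \<Rightarrow> real" where
  "riemann ix g l i j k u = cpd ix i (christoffel ix g l j k) u - cpd ix j (christoffel ix g l i k) u
     + (\<Sum>s\<in>{1..CARD('n)}. christoffel ix g l i s u * christoffel ix g s j k u
                          - christoffel ix g l j s u * christoffel ix g s i k u)"

definition cov_c :: "(nat \<Rightarrow> 'n::finite) \<Rightarrow> (nat \<Rightarrow> nat \<Rightarrow> real^'n \<Rightarrow> real) \<Rightarrow> (nat \<Rightarrow> nat \<Rightarrow> nat \<Rightarrow> real^'n \<Rightarrow> real)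
     \<Rightarrow> nat \<Rightarrow> nat \<Rightarrow> nat \<Rightarrow> nat \<Rightarrow> real^'n \<Rightarrow> real" where
  "cov_c ix g c i l j k u = cpd ix i (c l j k) u
     + (\<Sum>s\<in>{1..CARD('n)}. christoffel ix g l i s u * c s j k u
          - christoffel ix g s i j u * c l s k u - christoffel ix g s i k u * c l j s u)"

definition cov_vec :: "(nat \<Rightarrow> 'n::finite) \<Rightarrow> (nat \<Rightarrow> nat \<Rightarrow> real^'n \<Rightarrow> real) \<Rightarrow> (nat \<Rightarrow> real^'n \<Rightarrow> real)
     \<Rightarrow> nat \<Rightarrow> nat \<Rightarrow> real^'n \<Rightarrow> real" where
  "cov_vec ix g v i l u = cpd ix i (v l) u + (\<Sum>s\<in>{1..CARD('n)}. christoffel ix g l i s u * v s u)"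

definition lie_c :: "(nat \<Rightarrow> 'n::finite) \<Rightarrow> (nat \<Rightarrow> real^'n \<Rightarrow> real) \<Rightarrow> (nat \<Rightarrow> nat \<Rightarrow> nat \<Rightarrow> real^'n \<Rightarrow> real)
     \<Rightarrow> nat \<Rightarrow> nat \<Rightarrow> nat \<Rightarrow> real^'n \<Rightarrow> real" where
  "lie_c ix E c i j k u = (\<Sum>s\<in>{1..CARD('n)}. E s u * cpd ix s (c i j k) u - c s j k u * cpd ix s (E i) u
       + c i s k u * cpd ix j (E s) u + c i j s u * cpd ix k (E s) u)"

definition lie_vec :: "(nat \<Rightarrow> 'n::finite) \<Rightarrow> (nat \<Rightarrow> real^'n \<Rightarrow> real) \<Rightarrow> (nat \<Rightarrow> real^'n \<Rightarrow> real)
     \<Rightarrow> nat \<Rightarrow> real^'n \<Rightarrow> real" where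
  "lie_vec ix E v i u = (\<Sum>s\<in>{1..CARD('n)}. E s u * cpd ix s (v i) u - v s u * cpd ix s (E i) u)"

definition lie_metric :: "(nat \<Rightarrow> 'n::finite) \<Rightarrow> (nat \<Rightarrow> real^'n \<Rightarrow> real) \<Rightarrow> (nat \<Rightarrow> nat \<Rightarrow> real^'n \<Rightarrow> real)
     \<Rightarrow> nat \<Rightarrow> nat \<Rightarrow> real^'n \<Rightarrow> real" where
  "lie_metric ix E g i j u = (\<Sum>s\<in>{1..CARD('n)}. E s u * cpd ix s (g i j) u
       + g s j u * cpd ix i (E s) u + g i s u * cpd ix j (E s) u)"

definition frobenius_coords :: "(nat \<Rightarrow> 'n::finite) \<Rightarrow> (real^'n) set \<Rightarrow> (nat \<Rightarrow> nat \<Rightarrow> real^'n \<Rightarrow> real)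
    \<Rightarrow> (nat \<Rightarrow> nat \<Rightarrow> nat \<Rightarrow> real^'n \<Rightarrow> real) \<Rightarrow> (nat \<Rightarrow> real^'n \<Rightarrow> real) \<Rightarrow> (nat \<Rightarrow> real^'n \<Rightarrow> real) \<Rightarrow> real \<Rightarrow> bool" where
  "frobenius_coords ix U g c e E d \<longleftrightarrow> open U \<and>
    (\<forall>i\<in>{1..CARD('n)}. \<forall>j\<in>{1..CARD('n)}. smooth_on U (g i j)) \<and>
    (\<forall>u\<in>U. invertible (metric_matrix ix g u) \<and>
      (\<forall>i\<in>{1..CARD('n)}. \<forall>j\<in>{1..CARD('n)}. \<forall>k\<in>{1..CARD('n)}. \<forall>l\<in>{1..CARD('n)}.
         g i j u = g j i u \<and>
         riemann ix g l i j k u = 0 \<and>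
         c l j k u = c l k j u \<and>
         (\<Sum>s\<in>{1..CARD('n)}. c s j k u * c l i s u) = (\<Sum>s\<in>{1..CARD('n)}. c s i j u * c l s k u) \<and>
         (\<Sum>s\<in>{1..CARD('n)}. e s u * c l s j u) = (if l = j then 1 else 0) \<and>
         (\<Sum>s\<in>{1..CARD('n)}. g i s u * c s j k u) = (\<Sum>s\<in>{1..CARD('n)}. g j s u * c s i k u) \<and>
         cov_c ix g c i l j k u = cov_c ix g c j l i k u \<and>
         cov_vec ix g e i l u = 0 \<and>
         lie_c ix E c l j k u = c l j k u \<and>
         lie_vec ix E e l u = - e l u \<and>
         lie_metric ix E g i j u = (2 - d) * g i j u))"

definition bidx :: "(nat \<Rightarrow> nat) \<Rightarrow> nat \<Rightarrow> nat \<Rightarrow> nat" where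
  "bidx m \<alpha> j = (\<Sum>\<beta>\<in>{1..<\<alpha>}. m \<beta>) + j"

definition hankel_metric :: "(nat \<Rightarrow> nat) \<Rightarrow> nat \<Rightarrow> (nat \<Rightarrow> real^'n::finite \<Rightarrow> real) \<Rightarrow> nat \<Rightarrow> nat \<Rightarrow> real^'n \<Rightarrow> real" where
  "hankel_metric m r eb i j u = (\<Sum>\<alpha>\<in>{1..r}. \<Sum>a\<in>{1..m \<alpha>}. \<Sum>b\<in>{1..m \<alpha>}.
      if i = bidx m \<alpha> a \<and> j = bidx m \<alpha> b \<and> a + b - 1 \<le> m \<alpha> then eb (bidx m \<alpha> (a + b - 1)) u else 0)"

definition dh_c :: "(nat \<Rightarrow> nat) \<Rightarrow> nat \<Rightarrow> nat \<Rightarrow> nat \<Rightarrow> nat \<Rightarrow> real" where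
  "dh_c m r l j k = (\<Sum>\<alpha>\<in>{1..r}. \<Sum>a\<in>{1..m \<alpha>}. \<Sum>b\<in>{1..m \<alpha>}.
      if j = bidx m \<alpha> a \<and> k = bidx m \<alpha> b \<and> a + b \<le> m \<alpha> + 1 \<and> l = bidx m \<alpha> (a + b - 1) then 1 else 0)"

definition dh_e :: "(nat \<Rightarrow> nat) \<Rightarrow> nat \<Rightarrow> nat \<Rightarrow> real" where
  "dh_e m r s = (if \<exists>\<alpha>\<in>{1..r}. s = bidx m \<alpha> 1 then 1 else 0)"

definition dh_delta :: "(nat \<Rightarrow> nat) \<Rightarrow> nat \<Rightarrow> nat \<Rightarrow> real" where
  "dh_delta m r j = (if \<exists>\<alpha>\<in>{2..r}. j + 2 = bidx m \<alpha> 1 then 1 else 0)"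

text \<open>The map u |-> (z^1,...,z^(n-2)); z^j is stored in component ix (j+2), the
 components ix 1, ix 2 are set to 0.\<close>
definition zmap :: "(nat \<Rightarrow> 'n::finite) \<Rightarrow> (nat \<Rightarrow> nat) \<Rightarrow> nat \<Rightarrow> real^'n \<Rightarrow> real^'n" where
  "zmap ix m r u = (\<Sum>j\<in>{1..CARD('n) - 2}.
      ((u $ ix (j + 2) - dh_delta m r j * u $ ix 1) / u $ ix 2) *\<^sub>R axis (ix (j + 2)) 1)"

definition dz :: "(nat \<Rightarrow> 'n::finite) \<Rightarrow> nat \<Rightarrow> (real^'n \<Rightarrow> real) \<Rightarrow> real^'n \<Rightarrow> real" where
  "dz ix j f = pdv (ix (j + 2)) f"

end

theory Submission
  imports Defs
begin

lemma pdv_DERIV: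
  fixes g :: "real^'n::finite \<Rightarrow> real"
  assumes "(\<lambda>t. g (y + t *\<^sub>R axis k 1)) differentiable (at 0)"
  shows "((\<lambda>t. g (y + t *\<^sub>R axis k 1)) has_field_derivative pdv k g y) (at 0)"
  using assms unfolding pdv_def by (simp add: DERIV_deriv_iff_real_differentiable)

lemma pdv_DERIV_shift:
  fixes g :: "real^'n::finite \<Rightarrow> real"
  assumes "(\<lambda>t. g ((y + s *\<^sub>R axis k 1) + t *\<^sub>R axis k 1)) differentiable (at 0)"
  shows "((\<lambda>t. g (y + t *\<^sub>R axis k 1)) has_field_derivative pdv k g (y + s *\<^sub>R axis k 1)) (at s)"
proof -
  have D0: "((\<lambda>t. g ((y + s *\<^sub>R axis k 1) + t *\<^sub>R axis k 1)) has_field_derivative pdv k g (y + s *\<^sub>R axis k 1)) (at 0)"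
    by (rule pdv_DERIV[OF assms])
  have "((\<lambda>t. g (y + (t + s) *\<^sub>R axis k 1)) has_field_derivative pdv k g (y + s *\<^sub>R axis k 1)) (at 0)"
    proof -
      have "(\<lambda>t. g (y + (t + s) *\<^sub>R axis k 1)) = (\<lambda>t. g ((y + s *\<^sub>R axis k 1) + t *\<^sub>R axis k 1))"
        by (rule ext) (simp add: scaleR_add_left algebra_simps)
      then show ?thesis using D0 by simp
    qed
  then show ?thesis using DERIV_shift[of "\<lambda>t. g (y + t *\<^sub>R axis k 1)" _ 0 s] by simp
qed

lemma partials_frechet:
  fixes g :: "real^'n::finite \<Rightarrow> real"
  assumes U: "open U" and u: "u \<in> U"
    and dif: "\<forall>k. \<forall>y\<in>U. (\<lambda>t. g (y + t *\<^sub>R axis k 1)) differentiable (at 0)"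
    and cont: "\<forall>k. continuous_on U (pdv k g)"
  shows "(g has_derivative (\<lambda>h. \<Sum>k\<in>UNIV. h$k * pdv k g u)) (at u)"
  unfolding has_derivative_at_alt
proof (intro conjI allI impI)
  show "bounded_linear (\<lambda>h. \<Sum>k\<in>UNIV. h$k * pdv k g u)"
    by (intro bounded_linear_sum bounded_linear_mult_const bounded_linear_vec_nth)
  fix e :: real assume e: "e > 0"
  define \<epsilon> where "\<epsilon> = e / real CARD('n)"
  have \<epsilon>: "\<epsilon> > 0" using e by (simp add: \<epsilon>_def)
  have "\<forall>k. eventually (\<lambda>\<xi>. \<bar>pdv k g \<xi> - pdv k g u\<bar> < \<epsilon>) (nhds u)"
  proof
    fix k
    have "isCont (pdv k g) u" using cont U u continuous_on_eq_continuous_at by blast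
    then have "eventually (\<lambda>\<xi>. dist (pdv k g \<xi>) (pdv k g u) < \<epsilon>) (at u)"
      using \<epsilon> by (auto simp: isCont_def dest!: tendstoD)
    then have "eventually (\<lambda>\<xi>. \<xi> \<noteq> u \<longrightarrow> \<xi> \<in> UNIV \<longrightarrow> dist (pdv k g \<xi>) (pdv k g u) < \<epsilon>) (nhds u)"
      by (simp add: eventually_at_filter)
    then show "eventually (\<lambda>\<xi>. \<bar>pdv k g \<xi> - pdv k g u\<bar> < \<epsilon>) (nhds u)"
      by (rule eventually_mono) (use \<epsilon> in \<open>auto simp: dist_real_def\<close>)
  qed
  then have ev: "eventually (\<lambda>\<xi>. \<forall>k. \<bar>pdv k g \<xi> - pdv k g u\<bar> < \<epsilon>) (nhds u)"
    by (simp add: eventually_all_finite)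
  moreover have "eventually (\<lambda>\<xi>. \<xi> \<in> U) (nhds u)" using U u eventually_nhds_in_open by blast
  ultimately have "eventually (\<lambda>\<xi>. \<xi> \<in> U \<and> (\<forall>k. \<bar>pdv k g \<xi> - pdv k g u\<bar> < \<epsilon>)) (nhds u)"
    by (rule eventually_conj[rotated])
  then obtain d where d: "d > 0" and dP: "\<And>\<xi>. dist \<xi> u < d \<Longrightarrow> \<xi> \<in> U \<and> (\<forall>k. \<bar>pdv k g \<xi> - pdv k g u\<bar> < \<epsilon>)"
    unfolding eventually_nhds_metric by blast
  show "\<exists>d>0. \<forall>y. norm (y - u) < d \<longrightarrow>
      norm (g y - g u - (\<Sum>k\<in>UNIV. (y - u)$k * pdv k g u)) \<le> e * norm (y - u)"
  proof (intro exI[of _ d] conjI allI impI d)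
    fix y assume y: "norm (y - u) < d"
    define h where "h = y - u"
    define hK where "hK K = (\<Sum>k\<in>K. h$k *\<^sub>R axis k (1::real))" for K
    have hK_comp: "hK K $ i = (if i \<in> K then h$i else 0)" if "finite K" for K i
      using that by (simp add: hK_def sum_component axis_def if_distrib cong: if_cong)
    have hKs: "norm (hK K + s *\<^sub>R axis k 1) \<le> norm h" if "finite K" "k \<notin> K" "\<bar>s\<bar> \<le> \<bar>h$k\<bar>" for K k s
    proof (rule norm_le_componentwise_cart)
      fix i
      show "norm ((hK K + s *\<^sub>R axis k 1) $ i) \<le> norm (h $ i)"
      proof (cases "i = k")
        case True then show ?thesis using that by (simp add: hK_comp axis_def)
      next
        case False then show ?thesis using that by (simp add: hK_comp axis_def)
      qed
    qed
    have P: "\<bar>g (u + hK K) - g u - (\<Sum>k\<in>K. h$k * pdv k g u)\<bar> \<le> real (card K) * \<epsilon> * norm h"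
      if "finite K" for K
      using that
    proof (induction K rule: finite_induct)
      case empty then show ?case by (simp add: hK_def)
    next
      case (insert k K)
      define \<phi> where "\<phi> s = g (u + hK K + s *\<^sub>R axis k 1) - s * pdv k g u" for s
      let ?S = "closed_segment 0 (h$k)"
      have inS: "\<bar>s\<bar> \<le> \<bar>h$k\<bar>" if "s \<in> ?S" for s
        using that unfolding closed_segment_eq_real_ivl by (cases "0 \<le> h$k") auto
      have pt: "u + hK K + s *\<^sub>R axis k 1 \<in> U \<and> (\<forall>j. \<bar>pdv j g (u + hK K + s *\<^sub>R axis k 1) - pdv j g u\<bar> < \<epsilon>)"
        if "s \<in> ?S" for s
      proof (rule dP)
        have "norm (hK K + s *\<^sub>R axis k 1) \<le> norm h" using hKs[OF insert(1,2) inS[OF that]] .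
        then show "dist (u + hK K + s *\<^sub>R axis k 1) u < d" using y by (simp add: dist_norm h_def add.assoc)
      qed
      have der: "(\<phi> has_field_derivative (pdv k g (u + hK K + s *\<^sub>R axis k 1) - pdv k g u)) (at s within ?S)"
        if "s \<in> ?S" for s
      proof -
        have "((\<lambda>t. g ((u + hK K) + t *\<^sub>R axis k 1)) has_field_derivative pdv k g ((u + hK K) + s *\<^sub>R axis k 1)) (at s)"
          by (rule pdv_DERIV_shift) (use dif pt[OF that] in blast)
        moreover have "((\<lambda>t. t * pdv k g u) has_field_derivative pdv k g u) (at s)"
          using DERIV_cmult_right[OF DERIV_ident, of "pdv k g u" s] by simp
        ultimately have "((\<lambda>t. g ((u + hK K) + t *\<^sub>R axis k 1) - t * pdv k g u) has_field_derivative
             (pdv k g ((u + hK K) + s *\<^sub>R axis k 1) - pdv k g u)) (at s)"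
          by (rule DERIV_diff)
        then show ?thesis unfolding \<phi>_def by (rule has_field_derivative_at_within)
      qed
      have "norm (\<phi> (h$k) - \<phi> 0) \<le> \<epsilon> * norm (h$k - 0)"
      proof (rule field_differentiable_bound[OF convex_closed_segment der])
        fix z assume "z \<in> ?S"
        then show "norm (pdv k g (u + hK K + z *\<^sub>R axis k 1) - pdv k g u) \<le> \<epsilon>"
          using pt[of z] by (simp add: less_imp_le)
      qed auto
      then have "\<bar>\<phi> (h$k) - \<phi> 0\<bar> \<le> \<epsilon> * \<bar>h$k\<bar>" by simp
      also have "\<dots> \<le> \<epsilon> * norm h"
        using component_le_norm_cart[of h k] \<epsilon> by (intro mult_left_mono) auto
      finally have b1: "\<bar>\<phi> (h$k) - \<phi> 0\<bar> \<le> \<epsilon> * norm h" .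
      have hKins: "hK (insert k K) = hK K + h$k *\<^sub>R axis k 1"
        using insert by (simp add: hK_def add.commute)
      have "g (u + hK (insert k K)) - g u - (\<Sum>j\<in>insert k K. h$j * pdv j g u)
            = (\<phi> (h$k) - \<phi> 0) + (g (u + hK K) - g u - (\<Sum>j\<in>K. h$j * pdv j g u))"
        using insert(1,2) unfolding \<phi>_def hKins by (simp add: add.assoc)
      then have "\<bar>g (u + hK (insert k K)) - g u - (\<Sum>j\<in>insert k K. h$j * pdv j g u)\<bar>
           \<le> \<epsilon> * norm h + real (card K) * \<epsilon> * norm h"
        using b1 insert.IH by linarith
      moreover have "real (card (insert k K)) * \<epsilon> * norm h = \<epsilon> * norm h + real (card K) * \<epsilon> * norm h"
        using insert(1,2) by (simp add: ring_distribs)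
      ultimately show ?case by linarith
    qed
    have "hK UNIV = h" unfolding hK_def
      by (simp add: vec_eq_iff sum_component axis_def if_distrib cong: if_cong)
    with P[of UNIV] have "\<bar>g y - g u - (\<Sum>k\<in>UNIV. h$k * pdv k g u)\<bar> \<le> real CARD('n) * \<epsilon> * norm h"
      by (simp add: h_def)
    also have "\<dots> = e * norm h" by (simp add: \<epsilon>_def)
    finally show "norm (g y - g u - (\<Sum>k\<in>UNIV. (y - u)$k * pdv k g u)) \<le> e * norm (y - u)"
      by (simp add: h_def)
  qed
qed

lemma open_line_pre:
  fixes W :: "(real^'n::finite) set"
  assumes "open W"
  shows "open {t::real. u + t *\<^sub>R axis k 1 \<in> W}"
proof -
  have "open ((\<lambda>t::real. u + t *\<^sub>R axis k 1) -` W)"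
    by (rule continuous_open_vimage[OF assms]) (intro continuous_intros)
  then show ?thesis by (simp add: vimage_def)
qed

lemma line_transfer:
  fixes g g' :: "real^'n::finite \<Rightarrow> real"
  assumes W: "open W" and u: "u \<in> W" and eq: "\<forall>w\<in>W. g w = g' w"
    and d: "(\<lambda>t. g' (u + t *\<^sub>R axis k 1)) differentiable (at 0)"
  shows "(\<lambda>t. g (u + t *\<^sub>R axis k 1)) differentiable (at 0)" and "pdv k g u = pdv k g' u"
proof -
  let ?O = "{t::real. u + t *\<^sub>R axis k 1 \<in> W}"
  have O: "open ?O" "0 \<in> ?O" using open_line_pre[OF W] u by auto
  have eqO: "\<And>t. t \<in> ?O \<Longrightarrow> g' (u + t *\<^sub>R axis k 1) = g (u + t *\<^sub>R axis k 1)" using eq by auto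
  from d obtain D where "((\<lambda>t. g' (u + t *\<^sub>R axis k 1)) has_derivative D) (at 0)"
    unfolding differentiable_def by blast
  then have "((\<lambda>t. g (u + t *\<^sub>R axis k 1)) has_derivative D) (at 0)"
    by (rule has_derivative_transform_within_open[OF _ O eqO])
  then show "(\<lambda>t. g (u + t *\<^sub>R axis k 1)) differentiable (at 0)"
    unfolding differentiable_def by blast
  have "eventually (\<lambda>t. t \<in> ?O) (nhds 0)" using O eventually_nhds_in_open by blast
  then have "eventually (\<lambda>t. g (u + t *\<^sub>R axis k 1) = g' (u + t *\<^sub>R axis k 1)) (nhds 0)"
    by (rule eventually_mono) (use eq in auto)
  then show "pdv k g u = pdv k g' u" unfolding pdv_def by (rule deriv_cong_ev) simp
qed

lemma smooth_onI':
  fixes h :: "real^'n::finite \<Rightarrow> real"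
  assumes W: "open W" and hT: "h \<in> T"
    and T: "\<And>g. g \<in> T \<Longrightarrow> continuous_on W g \<and> (\<forall>k. \<forall>u\<in>W. (\<lambda>t. g (u + t *\<^sub>R axis k 1)) differentiable (at 0))
              \<and> (\<forall>k. \<exists>g'\<in>T. \<forall>w\<in>W. pdv k g w = g' w)"
  shows "smooth_on W h"
  unfolding smooth_on_def
proof (intro exI[of _ "{g. \<exists>g'\<in>T. \<forall>w\<in>W. g w = g' w}"] conjI ballI allI)
  show "h \<in> {g. \<exists>g'\<in>T. \<forall>w\<in>W. g w = g' w}" using hT by blast
next
  fix g assume "g \<in> {g. \<exists>g'\<in>T. \<forall>w\<in>W. g w = g' w}"
  then obtain g' where g': "g' \<in> T" "\<forall>w\<in>W. g w = g' w" by blast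
  note Tg = T[OF g'(1)]
  have cg': "continuous_on W g'" using Tg by (rule conjunct1)
  show "continuous_on W g" using continuous_on_cong[OF refl, of W g g'] g'(2) cg' by auto
  show "(\<lambda>t. g (u + t *\<^sub>R axis k 1)) differentiable (at 0)" if "u \<in> W" for k u
  proof -
    have "(\<lambda>t. g' (u + t *\<^sub>R axis k 1)) differentiable (at 0)" using Tg that by auto
    then show ?thesis by (rule line_transfer(1)[OF W that g'(2)])
  qed
  fix k
  obtain g'' where g'': "g'' \<in> T" "\<forall>w\<in>W. pdv k g' w = g'' w" using Tg by blast
  have "pdv k g w = g'' w" if "w \<in> W" for w
  proof -
    have "(\<lambda>t. g' (w + t *\<^sub>R axis k 1)) differentiable (at 0)" using Tg that by auto
    then have "pdv k g w = pdv k g' w" by (rule line_transfer(2)[OF W that g'(2)])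
    then show ?thesis using g''(2) that by simp
  qed
  then show "(\<lambda>u. pdv k g u) \<in> {g. \<exists>g'\<in>T. \<forall>w\<in>W. g w = g' w}" using g''(1) by blast
qed

lemma smooth_on_props:
  assumes "smooth_on U g"
  shows "continuous_on U g" "\<forall>k. \<forall>u\<in>U. (\<lambda>t. g (u + t *\<^sub>R axis k 1)) differentiable (at 0)"
    "\<forall>k. continuous_on U (pdv k g)" "\<forall>k. smooth_on U (pdv k g)"
proof -
  obtain S where S: "g \<in> S" "\<forall>g\<in>S. continuous_on U g \<and>
      (\<forall>k. \<forall>u\<in>U. (\<lambda>t. g (u + t *\<^sub>R axis k 1)) differentiable (at 0)) \<and>
      (\<forall>k. (\<lambda>u. pdv k g u) \<in> S)" using assms unfolding smooth_on_def by blast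
  show "continuous_on U g" "\<forall>k. \<forall>u\<in>U. (\<lambda>t. g (u + t *\<^sub>R axis k 1)) differentiable (at 0)"
    using S by auto
  show "\<forall>k. continuous_on U (pdv k g)"
  proof
    fix k have "(\<lambda>u. pdv k g u) \<in> S" using S by blast
    then show "continuous_on U (pdv k g)" using S(2) by blast
  qed
  show "\<forall>k. smooth_on U (pdv k g)"
  proof
    fix k have "pdv k g \<in> S" using S by blast
    then show "smooth_on U (pdv k g)" unfolding smooth_on_def using S(2) by blast
  qed
qed

lemma smooth_frechet:
  fixes g :: "real^'n::finite \<Rightarrow> real"
  assumes "open U" "smooth_on U g" "u \<in> U"
  shows "(g has_derivative (\<lambda>h. \<Sum>k\<in>UNIV. h$k * pdv k g u)) (at u)"
  using partials_frechet[OF assms(1,3)] smooth_on_props[OF assms(2)] by blast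

lemma chain_line:
  fixes g :: "real^'n::finite \<Rightarrow> real"
  assumes "open W" "smooth_on W g" "p + x *\<^sub>R v \<in> W"
  shows "((\<lambda>x. g (p + x *\<^sub>R v)) has_field_derivative (\<Sum>i\<in>UNIV. v$i * pdv i g (p + x *\<^sub>R v))) (at x within S)"
proof -
  have L: "(g has_derivative (\<lambda>h. \<Sum>k\<in>UNIV. h$k * pdv k g (p + x *\<^sub>R v))) (at (p + x *\<^sub>R v))"
    by (rule smooth_frechet[OF assms])
  have y: "((\<lambda>x. p + x *\<^sub>R v) has_derivative (\<lambda>h. h *\<^sub>R v)) (at x within S)"
    by (auto intro!: derivative_eq_intros)
  have "((\<lambda>x. g (p + x *\<^sub>R v)) has_derivative (\<lambda>h. \<Sum>k\<in>UNIV. (h *\<^sub>R v)$k * pdv k g (p + x *\<^sub>R v))) (at x within S)"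
    by (rule has_derivative_compose[OF y L])
  moreover have "(\<lambda>h. \<Sum>k\<in>UNIV. (h *\<^sub>R v)$k * pdv k g (p + x *\<^sub>R v)) = (*) (\<Sum>i\<in>UNIV. v$i * pdv i g (p + x *\<^sub>R v))"
    by (rule ext) (simp add: sum_distrib_left sum_distrib_right mult_ac)
  ultimately show ?thesis unfolding has_field_derivative_def by simp
qed

lemma sum_axis_pdv:
  fixes c :: "'n::finite \<Rightarrow> real"
  shows "(\<Sum>i\<in>UNIV. (axis k (1::real))$i * c i) = c k"
proof -
  have "(\<Sum>i\<in>UNIV. (axis k (1::real))$i * c i) = (\<Sum>i\<in>UNIV. if i = k then c i else 0)"
    by (rule sum.cong) (auto simp: axis_def)
  then show ?thesis by simp
qed

lemma poincare:
  fixes \<Phi> :: "'n::finite \<Rightarrow> real^'n \<Rightarrow> real"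
  assumes W: "open W" "convex W" "a \<in> W"
    and sm: "\<And>k. smooth_on W (\<Phi> k)"
    and cl: "\<And>i k w. w \<in> W \<Longrightarrow> pdv i (\<Phi> k) w = pdv k (\<Phi> i) w"
    and w: "w \<in> W"
  shows "((\<lambda>x. integral (cbox 0 1) (\<lambda>t::real. \<Sum>j\<in>UNIV. (w + x *\<^sub>R axis k 1 - a)$j * \<Phi> j (a + t *\<^sub>R (w + x *\<^sub>R axis k 1 - a))))
          has_field_derivative \<Phi> k w) (at 0)"
proof -
  define e where "e = (axis k 1 :: real^'n)"
  define Oo where "Oo = {x::real. w + x *\<^sub>R e \<in> W}"
  have Oo: "open Oo" "convex Oo" "0 \<in> Oo"
  proof -
    show "open Oo" unfolding Oo_def e_def by (rule open_line_pre[OF W(1)])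
    show "convex Oo"
    proof (rule convexI)
      fix x y u v :: real assume xy: "x \<in> Oo" "y \<in> Oo" and uv: "0 \<le> u" "0 \<le> v" "u + v = 1"
      have "u *\<^sub>R (w + x *\<^sub>R e) + v *\<^sub>R (w + y *\<^sub>R e) \<in> W"
        using W(2) xy uv unfolding convex_def Oo_def by blast
      moreover have "u *\<^sub>R (w + x *\<^sub>R e) + v *\<^sub>R (w + y *\<^sub>R e) = (u + v) *\<^sub>R w + (u * x + v * y) *\<^sub>R e"
        by (simp add: algebra_simps)
      ultimately show "u *\<^sub>R x + v *\<^sub>R y \<in> Oo" using uv by (simp add: Oo_def)
    qed
    show "0 \<in> Oo" using w by (simp add: Oo_def)
  qed
  define y where "y x t = a + t *\<^sub>R (w + x *\<^sub>R e - a)" for x t :: real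
  have yW: "y x t \<in> W" if "x \<in> Oo" "t \<in> cbox 0 1" for x t
  proof -
    have "w + x *\<^sub>R e \<in> W" using that by (simp add: Oo_def)
    then have "(1 - t) *\<^sub>R a + t *\<^sub>R (w + x *\<^sub>R e) \<in> W"
      using W(2,3) that unfolding convex_def by auto
    then show ?thesis by (simp add: y_def algebra_simps)
  qed
  define fx where "fx x t = \<Phi> k (y x t) + t * (\<Sum>j\<in>UNIV. (w + x *\<^sub>R e - a)$j * pdv k (\<Phi> j) (y x t))" for x t :: real
  have der: "((\<lambda>x. \<Sum>j\<in>UNIV. (w + x *\<^sub>R e - a)$j * \<Phi> j (y x t)) has_field_derivative fx x t) (at x within Oo)"
    if "x \<in> Oo" "t \<in> cbox 0 1" for x t
  proof -
    have yy: "y x' t = (a + t *\<^sub>R (w - a)) + x' *\<^sub>R (t *\<^sub>R e)" for x'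
      by (simp add: y_def algebra_simps)
    have dj: "((\<lambda>x. \<Phi> j (y x t)) has_field_derivative t * pdv k (\<Phi> j) (y x t)) (at x within Oo)" for j
    proof -
      have "((\<lambda>x. \<Phi> j ((a + t *\<^sub>R (w - a)) + x *\<^sub>R (t *\<^sub>R e))) has_field_derivative
          (\<Sum>i\<in>UNIV. (t *\<^sub>R e)$i * pdv i (\<Phi> j) ((a + t *\<^sub>R (w - a)) + x *\<^sub>R (t *\<^sub>R e)))) (at x within Oo)"
        by (rule chain_line[OF W(1) sm]) (use yW[OF that] yy in simp)
      moreover have "(\<Sum>i\<in>UNIV. (t *\<^sub>R e)$i * pdv i (\<Phi> j) ((a + t *\<^sub>R (w - a)) + x *\<^sub>R (t *\<^sub>R e)))
          = t * pdv k (\<Phi> j) (y x t)"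
      proof -
        have "(\<Sum>i\<in>UNIV. (t *\<^sub>R e)$i * pdv i (\<Phi> j) (y x t)) = t * (\<Sum>i\<in>UNIV. e$i * pdv i (\<Phi> j) (y x t))"
          by (simp add: sum_distrib_left mult.assoc)
        also have "\<dots> = t * pdv k (\<Phi> j) (y x t)" unfolding e_def by (simp only: sum_axis_pdv)
        finally show ?thesis unfolding yy[symmetric] .
      qed
      ultimately show ?thesis unfolding yy by simp
    qed
    have cj: "((\<lambda>x. (w + x *\<^sub>R e - a)$j) has_field_derivative e$j) (at x within Oo)" for j
      by (auto intro!: derivative_eq_intros)
    have "((\<lambda>x. \<Sum>j\<in>UNIV. (w + x *\<^sub>R e - a)$j * \<Phi> j (y x t)) has_field_derivative
        (\<Sum>j\<in>UNIV. e$j * \<Phi> j (y x t) + (w + x *\<^sub>R e - a)$j * (t * pdv k (\<Phi> j) (y x t)))) (at x within Oo)"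
    proof (rule DERIV_sum)
      fix j
      show "((\<lambda>x. (w + x *\<^sub>R e - a)$j * \<Phi> j (y x t)) has_field_derivative
        (e$j * \<Phi> j (y x t) + (w + x *\<^sub>R e - a)$j * (t * pdv k (\<Phi> j) (y x t)))) (at x within Oo)"
        using DERIV_mult'[OF cj[of j] dj[of j]] by (simp add: add.commute)
    qed
    moreover have "(\<Sum>j\<in>UNIV. e$j * \<Phi> j (y x t) + (w + x *\<^sub>R e - a)$j * (t * pdv k (\<Phi> j) (y x t))) = fx x t"
    proof -
      have "(\<Sum>j\<in>UNIV. e$j * \<Phi> j (y x t) + (w + x *\<^sub>R e - a)$j * (t * pdv k (\<Phi> j) (y x t)))
         = (\<Sum>j\<in>UNIV. e$j * \<Phi> j (y x t)) + (\<Sum>j\<in>UNIV. (w + x *\<^sub>R e - a)$j * (t * pdv k (\<Phi> j) (y x t)))"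
        by (rule sum.distrib)
      also have "\<dots> = \<Phi> k (y x t) + t * (\<Sum>j\<in>UNIV. (w + x *\<^sub>R e - a)$j * pdv k (\<Phi> j) (y x t))"
        unfolding e_def sum_axis_pdv by (simp add: sum_distrib_left mult_ac)
      finally show ?thesis by (simp add: fx_def)
    qed
    ultimately show ?thesis by simp
  qed
  have sm': "continuous_on W (\<Phi> j)" "continuous_on W (pdv k (\<Phi> j))" for j
    using smooth_on_props[OF sm[of j]] by auto
  have cy: "continuous_on (Oo \<times> cbox 0 1) (\<lambda>z. y (fst z) (snd z))"
    unfolding y_def by (intro continuous_intros)
  have yWz: "(\<lambda>z. y (fst z) (snd z)) ` (Oo \<times> cbox 0 1) \<subseteq> W" using yW by auto
  have c1: "continuous_on (Oo \<times> cbox 0 1) (\<lambda>z. \<Phi> j (y (fst z) (snd z)))" for j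
    by (rule continuous_on_compose2[OF sm'(1) cy yWz])
  have c2: "continuous_on (Oo \<times> cbox 0 1) (\<lambda>z. pdv k (\<Phi> j) (y (fst z) (snd z)))" for j
    by (rule continuous_on_compose2[OF sm'(2) cy yWz])
  have cfx: "continuous_on (Oo \<times> cbox 0 1) (\<lambda>(x, t). fx x t)"
    unfolding case_prod_beta fx_def by (intro continuous_intros c1 c2)
  have int: "(\<lambda>t. \<Sum>j\<in>UNIV. (w + x *\<^sub>R e - a)$j * \<Phi> j (y x t)) integrable_on cbox 0 1" if "x \<in> Oo" for x
  proof (rule integrable_continuous)
    have cyt: "continuous_on (cbox 0 1) (y x)" unfolding y_def by (intro continuous_intros)
    have "y x ` cbox 0 1 \<subseteq> W" using yW that by auto
    then have "continuous_on (cbox 0 1) (\<lambda>t. \<Phi> j (y x t))" for j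
      by (rule continuous_on_compose2[OF sm'(1) cyt])
    then show "continuous_on (cbox 0 1) (\<lambda>t. \<Sum>j\<in>UNIV. (w + x *\<^sub>R e - a)$j * \<Phi> j (y x t))"
      by (intro continuous_intros)
  qed
  have L: "((\<lambda>x. integral (cbox 0 1) (\<lambda>t. \<Sum>j\<in>UNIV. (w + x *\<^sub>R e - a)$j * \<Phi> j (y x t)))
      has_field_derivative integral (cbox 0 1) (fx 0)) (at 0 within Oo)"
    by (rule leibniz_rule_field_derivative[OF der int cfx Oo(3,2)])
  then have L': "((\<lambda>x. integral (cbox 0 1) (\<lambda>t. \<Sum>j\<in>UNIV. (w + x *\<^sub>R e - a)$j * \<Phi> j (y x t)))
      has_field_derivative integral (cbox 0 1) (fx 0)) (at 0)"
    using at_within_open[OF Oo(3,1)] by simp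
  have "integral (cbox 0 1) (fx 0) = \<Phi> k w"
  proof -
    define G where "G t = t * \<Phi> k (a + t *\<^sub>R (w - a))" for t :: real
    have dG: "(G has_vector_derivative fx 0 t) (at t within {0..1})" if "t \<in> {0..1}" for t
    proof -
      have tW: "a + t *\<^sub>R (w - a) \<in> W" using yW[OF Oo(3), of t] that by (simp add: y_def)
      have "((\<lambda>t. \<Phi> k (a + t *\<^sub>R (w - a))) has_field_derivative
           (\<Sum>i\<in>UNIV. (w - a)$i * pdv i (\<Phi> k) (a + t *\<^sub>R (w - a)))) (at t within {0..1})"
        by (rule chain_line[OF W(1) sm tW])
      then have "(G has_field_derivative (\<Phi> k (a + t *\<^sub>R (w - a)) +
           t * (\<Sum>i\<in>UNIV. (w - a)$i * pdv i (\<Phi> k) (a + t *\<^sub>R (w - a))))) (at t within {0..1})"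
        unfolding G_def using DERIV_mult'[OF DERIV_ident] by (simp add: add.commute)
      moreover have "(\<Sum>i\<in>UNIV. (w - a)$i * pdv i (\<Phi> k) (a + t *\<^sub>R (w - a)))
          = (\<Sum>i\<in>UNIV. (w - a)$i * pdv k (\<Phi> i) (a + t *\<^sub>R (w - a)))"
        using cl[OF tW] by simp
      ultimately show ?thesis
        by (simp add: fx_def y_def has_real_derivative_iff_has_vector_derivative[symmetric])
    qed
    have "(fx 0 has_integral (G 1 - G 0)) {0..1}"
      by (rule fundamental_theorem_of_calculus[OF _ dG]) auto
    then have "integral {0..1} (fx 0) = \<Phi> k w" by (simp add: G_def integral_unique)
    then show ?thesis by (simp add: cbox_interval)
  qed
  with L' show ?thesis by (simp add: y_def e_def)
qed

lemma homog_path: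
  fixes g :: "real^'n::finite \<Rightarrow> real"
  assumes U: "open U" "smooth_on U g"
    and E: "\<forall>y\<in>U. (\<Sum>k\<in>UNIV. y$k * pdv k g y) = - d * g y"
    and I: "\<forall>y\<in>U. (\<Sum>k\<in>UNIV. ev$k * pdv k g y) = 0"
    and lam: "lam > 0"
    and path: "\<forall>t\<in>{0..1}. u + t *\<^sub>R ((lam - 1) *\<^sub>R u + \<mu> *\<^sub>R ev) \<in> U"
  shows "g (lam *\<^sub>R u + \<mu> *\<^sub>R ev) = lam powr (- d) * g u"
proof -
  define v where "v = (lam - 1) *\<^sub>R u + \<mu> *\<^sub>R ev"
  define l where "l t = 1 + t * (lam - 1)" for t :: real
  define h where "h t = l t powr d * g (u + t *\<^sub>R v)" for t
  have lpos: "l t > 0" if "t \<in> {0..1}" for t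
  proof -
    have "l t = (1 - t) + t * lam" by (simp add: l_def algebra_simps)
    moreover have "(1 - t) + t * lam > 0"
    proof (cases "t = 0")
      case True then show ?thesis by simp
    next
      case False then have "t * lam > 0" using that lam by auto
      then show ?thesis using that by auto
    qed
    ultimately show ?thesis by simp
  qed
  have dh: "(h has_field_derivative 0) (at t within {0..1})" if t: "t \<in> {0..1}" for t
  proof -
    have pt: "u + t *\<^sub>R v \<in> U" using path t by (simp add: v_def)
    define D where "D i = pdv i g (u + t *\<^sub>R v)" for i
    define S where "S = (\<Sum>i\<in>UNIV. u$i * D i)"
    define Z where "Z = (\<Sum>i\<in>UNIV. ev$i * D i)"
    have Z0: "Z = 0" using I pt by (simp add: Z_def D_def)
    have lin: "(\<Sum>i\<in>UNIV. (a * u$i + b * ev$i) * D i) = a * S + b * Z" for a b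
      by (simp add: S_def Z_def algebra_simps sum.distrib sum_distrib_left)
    have dg: "((\<lambda>t. g (u + t *\<^sub>R v)) has_field_derivative (\<Sum>i\<in>UNIV. v$i * pdv i g (u + t *\<^sub>R v))) (at t)"
      by (rule chain_line[OF U pt])
    have "(\<Sum>i\<in>UNIV. v$i * pdv i g (u + t *\<^sub>R v)) = (lam - 1) * S + \<mu> * Z"
      using lin[of "lam - 1" \<mu>] unfolding D_def by (simp add: v_def)
    then have dg': "((\<lambda>t. g (u + t *\<^sub>R v)) has_field_derivative (lam - 1) * S) (at t)"
      using dg Z0 by simp
    have eqE: "(\<Sum>i\<in>UNIV. (u + t *\<^sub>R v)$i * pdv i g (u + t *\<^sub>R v)) = l t * S + (t * \<mu>) * Z"
    proof -
      have "(u + t *\<^sub>R v)$i = l t * u$i + (t * \<mu>) * ev$i" for i by (simp add: v_def l_def algebra_simps)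
      then show ?thesis using lin[of "l t" "t * \<mu>"] unfolding D_def by simp
    qed
    have e1: "(\<Sum>i\<in>UNIV. (u + t *\<^sub>R v)$i * pdv i g (u + t *\<^sub>R v)) = - d * g (u + t *\<^sub>R v)"
      using E pt by blast
    have eul: "l t * S = - d * g (u + t *\<^sub>R v)" using e1 unfolding eqE Z0 by simp
    have dl: "((\<lambda>t. l t powr d) has_field_derivative d * l t powr (d - of_nat 1) * (lam - 1)) (at t)"
      by (rule DERIV_fun_powr) (use lpos[OF t] in \<open>auto simp: l_def intro!: derivative_eq_intros\<close>)
    have "(h has_field_derivative (l t powr d * ((lam - 1) * S) + d * l t powr (d - of_nat 1) * (lam - 1) * g (u + t *\<^sub>R v))) (at t)"
      unfolding h_def by (rule DERIV_mult'[OF dl dg', THEN DERIV_cong]) (simp add: algebra_simps)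
    moreover have "l t powr d * ((lam - 1) * S) + d * l t powr (d - of_nat 1) * (lam - 1) * g (u + t *\<^sub>R v) = 0"
    proof -
      have "l t powr d = l t powr (d - 1) * l t" using lpos[OF t] by (simp add: powr_diff)
      then have "l t powr d * ((lam - 1) * S) = (lam - 1) * l t powr (d - 1) * (l t * S)" by simp
      also have "\<dots> = - (lam - 1) * l t powr (d - 1) * d * g (u + t *\<^sub>R v)" unfolding eul by (simp add: algebra_simps)
      finally show ?thesis by (simp add: algebra_simps)
    qed
    ultimately show ?thesis by (simp add: has_field_derivative_at_within)
  qed
  obtain c where c: "\<forall>t\<in>{0..1}. h t = c" using has_field_derivative_zero_constant[OF convex_real_interval(5) dh] by blast
  have "h 1 = h 0" using c by simp
  then have "lam powr d * g (lam *\<^sub>R u + \<mu> *\<^sub>R ev) = g u"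
    by (simp add: h_def l_def v_def algebra_simps)
  then show ?thesis using lam by (simp add: powr_minus_divide field_simps)
qed

locale blocks =
  fixes m :: "nat \<Rightarrow> nat" and r :: nat and n :: nat
  assumes r: "r \<ge> 1" and m_pos: "\<forall>\<alpha>\<in>{1..r}. m \<alpha> \<ge> 1" and m_sum: "(\<Sum>\<alpha>\<in>{1..r}. m \<alpha>) = n"
begin

definition T :: "nat \<Rightarrow> nat" where "T \<alpha> = (\<Sum>\<beta>\<in>{1..<\<alpha>}. m \<beta>)"

lemma bidx_T: "bidx m \<alpha> a = T \<alpha> + a" by (simp add: bidx_def T_def)

lemma T_Suc: "\<alpha> \<ge> 1 \<Longrightarrow> T (Suc \<alpha>) = T \<alpha> + m \<alpha>"
  by (simp add: T_def)

lemma T_1: "T 1 = 0" by (simp add: T_def)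

lemma T_mono: "\<alpha> \<le> \<beta> \<Longrightarrow> T \<alpha> \<le> T \<beta>"
  unfolding T_def by (rule sum_mono2) auto

lemma T_end: "T (Suc r) = n"
proof -
  have "{1..<Suc r} = {1..r}" by auto
  then show ?thesis using m_sum by (simp add: T_def)
qed

lemma T_strict: "\<alpha> \<in> {1..r} \<Longrightarrow> \<alpha> < \<beta> \<Longrightarrow> T \<alpha> < T \<beta>"
proof -
  assume a: "\<alpha> \<in> {1..r}" "\<alpha> < \<beta>"
  have "T (Suc \<alpha>) \<le> T \<beta>" using a by (intro T_mono) auto
  moreover have "T (Suc \<alpha>) = T \<alpha> + m \<alpha>" using a by (simp add: T_Suc)
  moreover have "m \<alpha> \<ge> 1" using a m_pos by auto
  ultimately show ?thesis by linarith
qed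

lemma T_inj: "\<alpha> \<in> {1..r} \<Longrightarrow> \<beta> \<in> {1..r} \<Longrightarrow> T \<alpha> = T \<beta> \<Longrightarrow> \<alpha> = \<beta>"
  using T_strict[of \<alpha> \<beta>] T_strict[of \<beta> \<alpha>] by (metis less_irrefl nat_neq_iff)

lemma bidx_range: "\<alpha> \<in> {1..r} \<Longrightarrow> a \<in> {1..m \<alpha>} \<Longrightarrow> bidx m \<alpha> a \<in> {1..n}"
proof -
  assume \<alpha>: "\<alpha> \<in> {1..r}" and a: "a \<in> {1..m \<alpha>}"
  have "T (Suc \<alpha>) \<le> T (Suc r)" using \<alpha> by (intro T_mono) auto
  then show ?thesis using \<alpha> a T_Suc[of \<alpha>] T_end by (auto simp: bidx_T)
qed

lemma bidx_inj:
  assumes "\<alpha> \<in> {1..r}" "a \<in> {1..m \<alpha>}" "\<beta> \<in> {1..r}" "b \<in> {1..m \<beta>}" "bidx m \<alpha> a = bidx m \<beta> b"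
  shows "\<alpha> = \<beta> \<and> a = b"
proof -
  have lt: False if "\<alpha>' < \<beta>'" "\<alpha>' \<in> {1..r}" "a' \<in> {1..m \<alpha>'}" "b' \<in> {1..m \<beta>'}"
      "T \<alpha>' + a' = T \<beta>' + b'" for \<alpha>' \<beta>' a' b'
  proof -
    have "T (Suc \<alpha>') \<le> T \<beta>'" using that by (intro T_mono) auto
    then show False using that T_Suc[of \<alpha>'] by auto
  qed
  have "\<alpha> = \<beta>"
  proof (rule ccontr)
    assume "\<alpha> \<noteq> \<beta>"
    then consider "\<alpha> < \<beta>" | "\<beta> < \<alpha>" by linarith
    then show False
    proof cases
      case 1 then show False using lt[of \<alpha> \<beta> a b] assms by (auto simp: bidx_T)
    next
      case 2 then show False using lt[of \<beta> \<alpha> b a] assms by (auto simp: bidx_T)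
    qed
  qed
  then show ?thesis using assms by (simp add: bidx_T)
qed

lemma bidx_surj:
  assumes j: "j \<in> {1..n}"
  shows "\<exists>\<alpha>\<in>{1..r}. \<exists>a\<in>{1..m \<alpha>}. j = bidx m \<alpha> a"
proof -
  define A where "A = {\<beta>\<in>{1..r}. T \<beta> < j}"
  have fin: "finite A" by (simp add: A_def)
  have ne: "1 \<in> A" using j r T_1 by (simp add: A_def)
  define \<alpha> where "\<alpha> = Max A"
  have \<alpha>A: "\<alpha> \<in> A" unfolding \<alpha>_def by (rule Max_in[OF fin]) (use ne in auto)
  then have \<alpha>: "\<alpha> \<in> {1..r}" "T \<alpha> < j" by (auto simp: A_def)
  have "j \<le> T (Suc \<alpha>)"
  proof (cases "\<alpha> = r")
    case True then show ?thesis using T_end j by simp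
  next
    case False
    show ?thesis
    proof (rule ccontr)
      assume "\<not> j \<le> T (Suc \<alpha>)"
      then have "Suc \<alpha> \<in> A" using \<alpha> False by (auto simp: A_def)
      then have "Suc \<alpha> \<le> \<alpha>" using fin by (simp add: \<alpha>_def)
      then show False by simp
    qed
  qed
  then have "j - T \<alpha> \<in> {1..m \<alpha>}" using \<alpha> T_Suc[of \<alpha>] by auto
  moreover have "j = bidx m \<alpha> (j - T \<alpha>)" using \<alpha> by (simp add: bidx_T)
  ultimately show ?thesis using \<alpha>(1) by blast
qed

lemma hankel_eval:
  assumes "\<alpha>0 \<in> {1..r}" "a0 \<in> {1..m \<alpha>0}" "\<beta>0 \<in> {1..r}" "b0 \<in> {1..m \<beta>0}"
  shows "hankel_metric m r eb (bidx m \<alpha>0 a0) (bidx m \<beta>0 b0) u =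
    (if \<alpha>0 = \<beta>0 \<and> a0 + b0 - 1 \<le> m \<alpha>0 then eb (bidx m \<alpha>0 (a0 + b0 - 1)) u else 0)"
proof -
  have "hankel_metric m r eb (bidx m \<alpha>0 a0) (bidx m \<beta>0 b0) u =
     (\<Sum>\<alpha>\<in>{1..r}. \<Sum>a\<in>{1..m \<alpha>}. \<Sum>b\<in>{1..m \<alpha>}.
       if \<alpha> = \<alpha>0 \<and> a = a0 \<and> b = b0 then (if \<alpha>0 = \<beta>0 \<and> a0 + b0 - 1 \<le> m \<alpha>0 then eb (bidx m \<alpha>0 (a0 + b0 - 1)) u else 0) else 0)"
    unfolding hankel_metric_def
  proof (intro sum.cong refl)
    fix \<alpha> a b assume "\<alpha> \<in> {1..r}" "a \<in> {1..m \<alpha>}" "b \<in> {1..m \<alpha>}"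
    then show "(if bidx m \<alpha>0 a0 = bidx m \<alpha> a \<and> bidx m \<beta>0 b0 = bidx m \<alpha> b \<and> a + b - 1 \<le> m \<alpha> then eb (bidx m \<alpha> (a + b - 1)) u else 0) =
       (if \<alpha> = \<alpha>0 \<and> a = a0 \<and> b = b0 then (if \<alpha>0 = \<beta>0 \<and> a0 + b0 - 1 \<le> m \<alpha>0 then eb (bidx m \<alpha>0 (a0 + b0 - 1)) u else 0) else 0)"
    proof (cases "\<alpha> = \<alpha>0 \<and> a = a0 \<and> b = b0")
      case True
      have "bidx m \<beta>0 b0 = bidx m \<alpha>0 b0 \<longleftrightarrow> \<alpha>0 = \<beta>0"
        using T_inj[of \<alpha>0 \<beta>0] assms by (auto simp: bidx_T)
      note iff = this
      from True have e: "\<alpha> = \<alpha>0" "a = a0" "b = b0" by auto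
      have c: "(bidx m \<alpha>0 a0 = bidx m \<alpha> a \<and> bidx m \<beta>0 b0 = bidx m \<alpha> b \<and> a + b - 1 \<le> m \<alpha>) = (\<alpha>0 = \<beta>0 \<and> a0 + b0 - 1 \<le> m \<alpha>0)"
        unfolding e using iff by blast
      show ?thesis unfolding c unfolding e by simp
    next
      case False
      have "\<not> (bidx m \<alpha>0 a0 = bidx m \<alpha> a \<and> bidx m \<beta>0 b0 = bidx m \<alpha> b)"
      proof
        assume h: "bidx m \<alpha>0 a0 = bidx m \<alpha> a \<and> bidx m \<beta>0 b0 = bidx m \<alpha> b"
        have "\<alpha>0 = \<alpha> \<and> a0 = a" using bidx_inj[of \<alpha>0 a0 \<alpha> a] assms \<open>\<alpha> \<in> {1..r}\<close> \<open>a \<in> {1..m \<alpha>}\<close> h by blast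
        moreover have "\<beta>0 = \<alpha> \<and> b0 = b" using bidx_inj[of \<beta>0 b0 \<alpha> b] assms \<open>\<alpha> \<in> {1..r}\<close> \<open>b \<in> {1..m \<alpha>}\<close> h by blast
        ultimately show False using False by simp
      qed
      then have n1: "\<not> (bidx m \<alpha>0 a0 = bidx m \<alpha> a \<and> bidx m \<beta>0 b0 = bidx m \<alpha> b \<and> a + b - 1 \<le> m \<alpha>)" by blast
      show ?thesis by (simp only: if_not_P[OF n1] if_not_P[OF False])
    qed
  qed
  also have "\<dots> = (if \<alpha>0 = \<beta>0 \<and> a0 + b0 - 1 \<le> m \<alpha>0 then eb (bidx m \<alpha>0 (a0 + b0 - 1)) u else 0)"
  proof (cases "\<alpha>0 = \<beta>0")
    case False then show ?thesis by simp
  next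
    case True
    define X where "X = (if \<alpha>0 = \<beta>0 \<and> a0 + b0 - 1 \<le> m \<alpha>0 then eb (bidx m \<alpha>0 (a0 + b0 - 1)) u else 0)"
    have b0: "b0 \<in> {1..m \<alpha>0}" using True assms by simp
    have "(\<Sum>b\<in>{1..m \<alpha>}. if \<alpha> = \<alpha>0 \<and> a = a0 \<and> b = b0 then X else 0) = (if \<alpha> = \<alpha>0 \<and> a = a0 then X else 0)" for \<alpha> a
      using b0 by (cases "\<alpha> = \<alpha>0 \<and> a = a0") (auto simp: sum.delta)
    then have "(\<Sum>\<alpha>\<in>{1..r}. \<Sum>a\<in>{1..m \<alpha>}. \<Sum>b\<in>{1..m \<alpha>}. if \<alpha> = \<alpha>0 \<and> a = a0 \<and> b = b0 then X else 0)
        = (\<Sum>\<alpha>\<in>{1..r}. \<Sum>a\<in>{1..m \<alpha>}. if \<alpha> = \<alpha>0 \<and> a = a0 then X else 0)"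
      by simp
    also have "\<dots> = X"
    proof -
      have "(\<Sum>a\<in>{1..m \<alpha>}. if \<alpha> = \<alpha>0 \<and> a = a0 then X else 0) = (if \<alpha> = \<alpha>0 then X else 0)" for \<alpha>
        using assms by (cases "\<alpha> = \<alpha>0") (auto simp: sum.delta)
      then show ?thesis using assms by (simp add: sum.delta)
    qed
    finally show ?thesis unfolding X_def .
  qed
  finally show ?thesis .
qed

end

lemma ix_inv:
  assumes ix: "bij_betw ix {1..CARD('n::finite)} (UNIV::'n set)" and k: "k \<in> {1..CARD('n)}"
  shows "inv_into {1..CARD('n)} ix (ix k) = k"
  using ix k by (simp add: bij_betw_def inv_into_f_f)

lemma ix_eq:
  assumes ix: "bij_betw ix {1..CARD('n::finite)} (UNIV::'n set)" and "k \<in> {1..CARD('n)}" "j \<in> {1..CARD('n)}"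
  shows "ix k = ix j \<longleftrightarrow> k = j"
  using assms unfolding bij_betw_def inj_on_def by blast

lemma sum_ix:
  assumes ix: "bij_betw ix {1..CARD('n::finite)} (UNIV::'n set)"
  shows "(\<Sum>z\<in>(UNIV::'n set). f z) = (\<Sum>k\<in>{1..CARD('n)}. f (ix k))"
  using sum.reindex_bij_betw[OF ix, of f] by simp

lemma pdv_coord: "pdv k (\<lambda>u::real^'n::finite. u $ j) u = (if j = k then 1 else 0)"
proof -
  have "((\<lambda>t. (u + t *\<^sub>R axis k 1) $ j) has_field_derivative (axis k 1 $ j)) (at 0)"
    by (auto intro!: derivative_eq_intros)
  then show ?thesis unfolding pdv_def by (simp add: DERIV_imp_deriv axis_def)
qed

lemma pdv_const: "pdv k (\<lambda>u::real^'n::finite. c) u = 0"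
  unfolding pdv_def by (rule DERIV_imp_deriv[OF DERIV_const])

lemma inv_metric_right:
  assumes ix: "bij_betw ix {1..CARD('n::finite)} (UNIV::'n set)"
    and inv: "invertible (metric_matrix ix g u)"
    and k: "k \<in> {1..CARD('n)}" and j: "j \<in> {1..CARD('n)}"
  shows "(\<Sum>l\<in>{1..CARD('n)}. g k l u * inv_metric ix g l j u) = (if k = j then 1 else 0)"
proof -
  define A where "A = metric_matrix ix g u"
  have AA: "A ** matrix_inv A = mat 1"
    using someI_ex[OF inv[unfolded invertible_def]] unfolding matrix_inv_def A_def by blast
  have "(A ** matrix_inv A) $ ix k $ ix j = (\<Sum>z\<in>UNIV. A $ ix k $ z * matrix_inv A $ z $ ix j)"
    by (simp add: matrix_matrix_mult_def)
  also have "\<dots> = (\<Sum>l\<in>{1..CARD('n)}. A $ ix k $ ix l * matrix_inv A $ ix l $ ix j)"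
    by (rule sum_ix[OF ix])
  also have "\<dots> = (\<Sum>l\<in>{1..CARD('n)}. g k l u * inv_metric ix g l j u)"
  proof (intro sum.cong refl)
    fix l assume l: "l \<in> {1..CARD('n)}"
    show "A $ ix k $ ix l * matrix_inv A $ ix l $ ix j = g k l u * inv_metric ix g l j u"
      by (simp only: A_def metric_matrix_def inv_metric_def vec_lambda_beta ix_inv[OF ix k] ix_inv[OF ix l])
  qed
  finally have "(\<Sum>l\<in>{1..CARD('n)}. g k l u * inv_metric ix g l j u) = mat 1 $ ix k $ ix j"
    using AA by simp
  then show ?thesis using ix_eq[OF ix k j] by (simp add: mat_def)
qed

context blocks
begin

lemma hankel_fun1:
  assumes "\<beta> \<in> {1..r}" "b \<in> {1..m \<beta>}"
  shows "hankel_metric m r eb (bidx m \<beta> 1) (bidx m \<beta> b) = eb (bidx m \<beta> b)"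
proof
  fix u
  have "1 \<in> {1..m \<beta>}" using assms m_pos by auto
  then show "hankel_metric m r eb (bidx m \<beta> 1) (bidx m \<beta> b) u = eb (bidx m \<beta> b) u"
    using hankel_eval[of \<beta> 1 \<beta> b eb u] assms \<open>1 \<in> {1..m \<beta>}\<close> by simp
qed

lemma hankel_fun0:
  assumes "\<alpha> \<in> {1..r}" "\<beta> \<in> {1..r}" "b \<in> {1..m \<beta>}" "\<alpha> \<noteq> \<beta>"
  shows "hankel_metric m r eb (bidx m \<alpha> 1) (bidx m \<beta> b) = (\<lambda>u. 0)"
proof
  fix u
  have "1 \<in> {1..m \<alpha>}" using assms m_pos by auto
  then show "hankel_metric m r eb (bidx m \<alpha> 1) (bidx m \<beta> b) u = 0"
    using hankel_eval[of \<alpha> 1 \<beta> b eb u] assms \<open>1 \<in> {1..m \<alpha>}\<close> by simp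
qed

lemma hankel_sym:
  assumes "i \<in> {1..n}" "j \<in> {1..n}"
  shows "hankel_metric m r eb i j = hankel_metric m r eb j i"
proof
  fix u
  obtain \<alpha> a where \<alpha>: "\<alpha> \<in> {1..r}" "a \<in> {1..m \<alpha>}" "i = bidx m \<alpha> a" using bidx_surj assms(1) by blast
  obtain \<beta> b where \<beta>: "\<beta> \<in> {1..r}" "b \<in> {1..m \<beta>}" "j = bidx m \<beta> b" using bidx_surj assms(2) by blast
  show "hankel_metric m r eb i j u = hankel_metric m r eb j i u"
    unfolding \<alpha>(3) \<beta>(3) hankel_eval[OF \<alpha>(1,2) \<beta>(1,2)] hankel_eval[OF \<beta>(1,2) \<alpha>(1,2)]
    by (auto simp: add.commute)
qed

lemma e_sum:
  "(\<Sum>s\<in>{1..n}. dh_e m r s * X s) = (\<Sum>\<alpha>\<in>{1..r}. X (bidx m \<alpha> 1))"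
proof -
  define Es where "Es = (\<lambda>\<alpha>. bidx m \<alpha> 1) ` {1..r}"
  have Esub: "Es \<subseteq> {1..n}" using bidx_range m_pos by (auto simp: Es_def)
  have "(\<Sum>s\<in>{1..n}. dh_e m r s * X s) = (\<Sum>s\<in>{1..n}. if s \<in> Es then X s else 0)"
    by (intro sum.cong refl) (auto simp: dh_e_def Es_def)
  also have "\<dots> = (\<Sum>s\<in>Es. X s)"
    using Esub by (simp add: sum.If_cases Int_absorb1)
  also have "\<dots> = (\<Sum>\<alpha>\<in>{1..r}. X (bidx m \<alpha> 1))"
    unfolding Es_def
  proof (rule sum.reindex_cong[OF _ refl refl])
    show "inj_on (\<lambda>\<alpha>. bidx m \<alpha> 1) {1..r}"
    proof (rule inj_onI)
      fix x y assume xy: "x \<in> {1..r}" "y \<in> {1..r}" "bidx m x 1 = bidx m y 1"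
      have "1 \<in> {1..m x}" "1 \<in> {1..m y}" using xy m_pos by auto
      then show "x = y" using bidx_inj[of x 1 y 1] xy by blast
    qed
  qed
  finally show ?thesis .
qed

end

lemma sum_rearr:
  fixes a :: "nat \<Rightarrow> real"
  assumes "finite N"
  shows "(\<Sum>l\<in>N. a l * (\<Sum>s\<in>N. (c * (\<Sum>q\<in>N. b l q * t s q)) * e s))
       = c * (\<Sum>s\<in>N. e s * (\<Sum>q\<in>N. (\<Sum>l\<in>N. a l * b l q) * t s q))"
proof -
  have "(\<Sum>l\<in>N. a l * (\<Sum>s\<in>N. (c * (\<Sum>q\<in>N. b l q * t s q)) * e s))
      = (\<Sum>l\<in>N. \<Sum>s\<in>N. \<Sum>q\<in>N. c * (e s * (a l * b l q * t s q)))"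
    by (simp add: sum_distrib_left sum_distrib_right mult_ac)
  also have "\<dots> = (\<Sum>s\<in>N. \<Sum>l\<in>N. \<Sum>q\<in>N. c * (e s * (a l * b l q * t s q)))"
    by (rule sum.swap)
  also have "\<dots> = (\<Sum>s\<in>N. \<Sum>q\<in>N. \<Sum>l\<in>N. c * (e s * (a l * b l q * t s q)))"
    by (intro sum.cong refl sum.swap)
  also have "\<dots> = c * (\<Sum>s\<in>N. e s * (\<Sum>q\<in>N. (\<Sum>l\<in>N. a l * b l q) * t s q))"
    by (simp add: sum_distrib_left sum_distrib_right mult_ac)
  finally show ?thesis .
qed

lemma frob_cons:
  fixes ix :: "nat \<Rightarrow> 'n::finite" and eb :: "nat \<Rightarrow> real^'n \<Rightarrow> real"
  assumes ix: "bij_betw ix {1..CARD('n)} UNIV"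
    and bl: "blocks m r CARD('n)"
    and frob: "frobenius_coords ix U (hankel_metric m r eb) (\<lambda>l j k u. dh_c m r l j k)
                 (\<lambda>s u. dh_e m r s) (\<lambda>s u. u $ ix s) d"
  shows "open U" "\<forall>j\<in>{1..CARD('n)}. smooth_on U (eb j)"
    "\<forall>u\<in>U. \<forall>j\<in>{1..CARD('n)}. (\<Sum>s\<in>{1..CARD('n)}. u $ ix s * cpd ix s (eb j) u) = - d * eb j u"
    "\<forall>u\<in>U. \<forall>j\<in>{1..CARD('n)}. (\<Sum>\<alpha>\<in>{1..r}. cpd ix (bidx m \<alpha> 1) (eb j) u) = 0"
    "\<forall>u\<in>U. \<forall>i\<in>{1..CARD('n)}. \<forall>j\<in>{1..CARD('n)}. cpd ix i (eb j) u = cpd ix j (eb i) u"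
proof -
  interpret blocks m r "CARD('n)" by (rule bl)
  define N where "N = {1..CARD('n)}"
  define g where "g = hankel_metric m r eb"
  note fr = frob[unfolded frobenius_coords_def, folded g_def N_def]
  show "open U" using fr by blast
  have sm: "smooth_on U (g i j)" if "i \<in> N" "j \<in> N" for i j using fr that by blast
  have Nne: "1 \<in> N" by (simp add: N_def)
  have pt: "invertible (metric_matrix ix g u) \<and> (\<forall>i\<in>N. \<forall>j\<in>N. \<forall>k\<in>N. \<forall>l\<in>N.
         g i j u = g j i u \<and>
         riemann ix g l i j k u = 0 \<and>
         dh_c m r l j k = dh_c m r l k j \<and>
         (\<Sum>s\<in>N. dh_c m r s j k * dh_c m r l i s) = (\<Sum>s\<in>N. dh_c m r s i j * dh_c m r l s k) \<and>
         (\<Sum>s\<in>N. dh_e m r s * dh_c m r l s j) = (if l = j then 1 else 0) \<and>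
         (\<Sum>s\<in>N. g i s u * dh_c m r s j k) = (\<Sum>s\<in>N. g j s u * dh_c m r s i k) \<and>
         cov_c ix g (\<lambda>l j k u. dh_c m r l j k) i l j k u = cov_c ix g (\<lambda>l j k u. dh_c m r l j k) j l i k u \<and>
         cov_vec ix g (\<lambda>s u. dh_e m r s) i l u = 0 \<and>
         lie_c ix (\<lambda>s u. u $ ix s) (\<lambda>l j k u. dh_c m r l j k) l j k u = dh_c m r l j k \<and>
         lie_vec ix (\<lambda>s u. u $ ix s) (\<lambda>s u. dh_e m r s) l u = - dh_e m r l \<and>
         lie_metric ix (\<lambda>s u. u $ ix s) g i j u = (2 - d) * g i j u)" if "u \<in> U" for u
    using fr that by blast
  have inv: "invertible (metric_matrix ix g u)" if "u \<in> U" for u using pt[OF that] by blast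
  have lie: "lie_metric ix (\<lambda>s u. u $ ix s) g i j u = (2 - d) * g i j u" if "u \<in> U" "i \<in> N" "j \<in> N" for u i j
    using pt[OF that(1)] that(2,3) by blast
  have cov: "cov_vec ix g (\<lambda>s u. dh_e m r s) i l u = 0" if "u \<in> U" "i \<in> N" "l \<in> N" for u i l
    using pt[OF that(1)] that(2,3) by blast
  have cpd_coord: "cpd ix i (\<lambda>u. u $ ix s) u = (if s = i then 1 else 0)" if "i \<in> N" "s \<in> N" for i s u
    using ix_eq[OF ix, of s i] that by (simp add: cpd_def pdv_coord N_def)
  have blk: "\<exists>\<beta>\<in>{1..r}. \<exists>b\<in>{1..m \<beta>}. j = bidx m \<beta> b" if "j \<in> N" for j
    using bidx_surj that by (simp add: N_def)
  have one_in: "1 \<in> {1..m \<beta>}" if "\<beta> \<in> {1..r}" for \<beta> using m_pos that by auto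
  have b1N: "bidx m \<beta> 1 \<in> N" if "\<beta> \<in> {1..r}" for \<beta> using bidx_range[OF that one_in[OF that]] by (simp add: N_def)
  have ebg: "eb j = g (bidx m \<beta> 1) j" if "\<beta> \<in> {1..r}" "b \<in> {1..m \<beta>}" "j = bidx m \<beta> b" for j \<beta> b
    using hankel_fun1[OF that(1,2), of eb] that(3) by (simp add: g_def)
  show "\<forall>j\<in>{1..CARD('n)}. smooth_on U (eb j)"
  proof
    fix j assume "j \<in> {1..CARD('n)}"
    then have "j \<in> N" by (simp add: N_def)
    obtain \<beta> b where \<beta>: "\<beta> \<in> {1..r}" "b \<in> {1..m \<beta>}" "j = bidx m \<beta> b" using blk[OF \<open>j \<in> N\<close>] by blast
    then show "smooth_on U (eb j)" using sm[OF b1N[OF \<beta>(1)] \<open>j \<in> N\<close>] ebg[OF \<beta>] by simp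
  qed
  show "\<forall>u\<in>U. \<forall>j\<in>{1..CARD('n)}. (\<Sum>s\<in>{1..CARD('n)}. u $ ix s * cpd ix s (eb j) u) = - d * eb j u"
  proof (intro ballI)
    fix u j assume u: "u \<in> U" and jN': "j \<in> {1..CARD('n)}"
    have jN: "j \<in> N" using jN' by (simp add: N_def)
    obtain \<beta> b where \<beta>: "\<beta> \<in> {1..r}" "b \<in> {1..m \<beta>}" "j = bidx m \<beta> b" using blk[OF jN] by blast
    define i where "i = bidx m \<beta> 1"
    have iN: "i \<in> N" using b1N[OF \<beta>(1)] by (simp add: i_def)
    have L: "lie_metric ix (\<lambda>s u. u $ ix s) g i j u = (2 - d) * g i j u" by (rule lie[OF u iN jN])
    have "lie_metric ix (\<lambda>s u. u $ ix s) g i j u =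
       (\<Sum>s\<in>N. u $ ix s * cpd ix s (g i j) u + (if s = i then g s j u else 0) + (if s = j then g i s u else 0))"
      unfolding lie_metric_def N_def[symmetric]
    proof (intro sum.cong refl)
      fix s assume sN: "s \<in> N"
      show "u $ ix s * cpd ix s (g i j) u + g s j u * cpd ix i (\<lambda>u. u $ ix s) u + g i s u * cpd ix j (\<lambda>u. u $ ix s) u =
        u $ ix s * cpd ix s (g i j) u + (if s = i then g s j u else 0) + (if s = j then g i s u else 0)"
        unfolding cpd_coord[OF iN sN] cpd_coord[OF jN sN] by simp
    qed
    also have "\<dots> = (\<Sum>s\<in>N. u $ ix s * cpd ix s (g i j) u) + g i j u + g i j u"
      using iN jN by (simp add: sum.distrib N_def)
    finally have "(\<Sum>s\<in>N. u $ ix s * cpd ix s (g i j) u) = - d * g i j u" using L by (simp add: algebra_simps)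
    moreover have "g i j = eb j" using ebg[OF \<beta>] by (simp add: i_def)
    ultimately show "(\<Sum>s\<in>{1..CARD('n)}. u $ ix s * cpd ix s (eb j) u) = - d * eb j u" by (simp add: N_def)
  qed
  have Tz: "(\<Sum>\<alpha>\<in>{1..r}. cpd ix i (g (bidx m \<alpha> 1) k) u + cpd ix (bidx m \<alpha> 1) (g i k) u - cpd ix k (g i (bidx m \<alpha> 1)) u) = 0"
    if u: "u \<in> U" and iN: "i \<in> N" and kN: "k \<in> N" for u i k
  proof -
    define Tt where "Tt s q = cpd ix i (g s q) u + cpd ix s (g i q) u - cpd ix q (g i s) u" for s q
    have finN: "finite N" by (simp add: N_def)
    have c0: "(\<Sum>s\<in>N. christoffel ix g l i s u * dh_e m r s) = 0" if "l \<in> N" for l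
      using cov[OF u iN that] unfolding cov_vec_def N_def[symmetric] by (simp add: cpd_def pdv_const)
    have christ: "christoffel ix g l i s u = (1/2) * (\<Sum>q\<in>N. inv_metric ix g l q u * Tt s q)" for l s
      by (simp add: christoffel_def N_def Tt_def)
    have "(\<Sum>l\<in>N. g k l u * (\<Sum>s\<in>N. christoffel ix g l i s u * dh_e m r s)) = 0" using c0 by simp
    then have "(\<Sum>l\<in>N. g k l u * (\<Sum>s\<in>N. ((1/2) * (\<Sum>q\<in>N. inv_metric ix g l q u * Tt s q)) * dh_e m r s)) = 0"
      unfolding christ .
    then have "(1/2) * (\<Sum>s\<in>N. dh_e m r s * (\<Sum>q\<in>N. (\<Sum>l\<in>N. g k l u * inv_metric ix g l q u) * Tt s q)) = 0"
      unfolding sum_rearr[OF finN] .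
    moreover have "(\<Sum>q\<in>N. (\<Sum>l\<in>N. g k l u * inv_metric ix g l q u) * Tt s q) = Tt s k" for s
    proof -
      have "(\<Sum>q\<in>N. (\<Sum>l\<in>N. g k l u * inv_metric ix g l q u) * Tt s q) = (\<Sum>q\<in>N. (if k = q then Tt s q else 0))"
      proof (intro sum.cong refl)
        fix q assume "q \<in> N"
        then show "(\<Sum>l\<in>N. g k l u * inv_metric ix g l q u) * Tt s q = (if k = q then Tt s q else 0)"
          using inv_metric_right[OF ix inv[OF u], of k q] kN by (simp add: N_def)
      qed
      also have "\<dots> = Tt s k" using kN finN by simp
      finally show ?thesis .
    qed
    ultimately have "(\<Sum>s\<in>N. dh_e m r s * Tt s k) = 0" by simp
    then have "(\<Sum>\<alpha>\<in>{1..r}. Tt (bidx m \<alpha> 1) k) = 0" unfolding N_def e_sum .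
    then show ?thesis by (simp add: Tt_def)
  qed
  have gsym: "g i j = g j i" if "i \<in> N" "j \<in> N" for i j using hankel_sym that by (simp add: g_def N_def)
  have gblk: "g (bidx m \<alpha> 1) k = (if \<alpha> = \<beta> then eb k else (\<lambda>u. 0))"
    if "\<alpha> \<in> {1..r}" "\<beta> \<in> {1..r}" "b \<in> {1..m \<beta>}" "k = bidx m \<beta> b" for \<alpha> \<beta> b k
  proof (cases "\<alpha> = \<beta>")
    case True then show ?thesis using ebg[OF that(2-4)] by simp
  next
    case False then show ?thesis using hankel_fun0[OF that(1-3) False, of eb] that(4) by (simp add: g_def)
  qed
  define Pm where "Pm u i k = (\<Sum>\<alpha>\<in>{1..r}. cpd ix i (g (bidx m \<alpha> 1) k) u)" for u i k
  define Am where "Am u i k = (\<Sum>\<alpha>\<in>{1..r}. cpd ix (bidx m \<alpha> 1) (g i k) u)" for u i k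
  have QP: "(\<Sum>\<alpha>\<in>{1..r}. cpd ix k (g i (bidx m \<alpha> 1)) u) = Pm u k i" if "i \<in> N" for u i k
    unfolding Pm_def
  proof (intro sum.cong refl)
    fix \<alpha> assume "\<alpha> \<in> {1..r}"
    then show "cpd ix k (g i (bidx m \<alpha> 1)) u = cpd ix k (g (bidx m \<alpha> 1) i) u"
      using gsym[OF that b1N[OF \<open>\<alpha> \<in> {1..r}\<close>]] by simp
  qed
  have AA: "Am u i k = Am u k i" if "i \<in> N" "k \<in> N" for u i k
    unfolding Am_def using gsym[OF that] by simp
  have PA: "Pm u i k + Am u i k - Pm u k i = 0" if "u \<in> U" "i \<in> N" "k \<in> N" for u i k
  proof -
    have "(\<Sum>\<alpha>\<in>{1..r}. cpd ix i (g (bidx m \<alpha> 1) k) u + cpd ix (bidx m \<alpha> 1) (g i k) u - cpd ix k (g i (bidx m \<alpha> 1)) u)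
       = Pm u i k + Am u i k - (\<Sum>\<alpha>\<in>{1..r}. cpd ix k (g i (bidx m \<alpha> 1)) u)"
      unfolding Pm_def Am_def by (simp add: sum.distrib sum_subtractf)
    then show ?thesis using Tz[OF that] QP[OF that(2)] by simp
  qed
  have A0: "Am u i k = 0" if "u \<in> U" "i \<in> N" "k \<in> N" for u i k
    using PA[OF that] PA[OF that(1,3,2)] AA[OF that(2,3), of u] by linarith
  have Psym: "Pm u i k = Pm u k i" if "u \<in> U" "i \<in> N" "k \<in> N" for u i k
    using PA[OF that] PA[OF that(1,3,2)] AA[OF that(2,3), of u] by linarith
  have Peb: "Pm u i k = cpd ix i (eb k) u" if kN: "k \<in> N" for u i k
  proof -
    obtain \<beta> b where \<beta>: "\<beta> \<in> {1..r}" "b \<in> {1..m \<beta>}" "k = bidx m \<beta> b" using blk[OF kN] by blast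
    have "Pm u i k = (\<Sum>\<alpha>\<in>{1..r}. if \<alpha> = \<beta> then cpd ix i (eb k) u else 0)"
      unfolding Pm_def
    proof (intro sum.cong refl)
      fix \<alpha> assume "\<alpha> \<in> {1..r}"
      then show "cpd ix i (g (bidx m \<alpha> 1) k) u = (if \<alpha> = \<beta> then cpd ix i (eb k) u else 0)"
        using gblk[OF _ \<beta>] by (simp add: cpd_def pdv_const)
    qed
    also have "\<dots> = cpd ix i (eb k) u" using \<beta>(1) by simp
    finally show ?thesis .
  qed
  show "\<forall>u\<in>U. \<forall>i\<in>{1..CARD('n)}. \<forall>j\<in>{1..CARD('n)}. cpd ix i (eb j) u = cpd ix j (eb i) u"
    using Psym Peb by (simp add: N_def)
  show "\<forall>u\<in>U. \<forall>j\<in>{1..CARD('n)}. (\<Sum>\<alpha>\<in>{1..r}. cpd ix (bidx m \<alpha> 1) (eb j) u) = 0"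
  proof (intro ballI)
    fix u j assume u: "u \<in> U" and j: "j \<in> {1..CARD('n)}"
    then have jN: "j \<in> N" by (simp add: N_def)
    obtain \<beta> b where \<beta>: "\<beta> \<in> {1..r}" "b \<in> {1..m \<beta>}" "j = bidx m \<beta> b" using blk[OF jN] by blast
    have "Am u (bidx m \<beta> 1) j = 0" using A0[OF u b1N[OF \<beta>(1)] jN] .
    then show "(\<Sum>\<alpha>\<in>{1..r}. cpd ix (bidx m \<alpha> 1) (eb j) u) = 0"
      unfolding Am_def using ebg[OF \<beta>] by simp
  qed
qed

locale mc =
  fixes ix :: "nat \<Rightarrow> 'n::finite" and m :: "nat \<Rightarrow> nat" and r :: nat
    and eb :: "nat \<Rightarrow> real^'n \<Rightarrow> real" and d :: real and U :: "(real^'n) set" and p :: "real^'n"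
  assumes ix: "bij_betw ix {1..CARD('n)} UNIV"
    and bl: "blocks m r CARD('n)"
    and m1: "m 1 \<ge> 2"
    and pU: "p \<in> U"
    and oU: "open U"
    and smE: "\<forall>j\<in>{1..CARD('n)}. smooth_on U (eb j)"
    and Eul: "\<forall>u\<in>U. \<forall>j\<in>{1..CARD('n)}. (\<Sum>s\<in>{1..CARD('n)}. u $ ix s * cpd ix s (eb j) u) = - d * eb j u"
    and Inv: "\<forall>u\<in>U. \<forall>j\<in>{1..CARD('n)}. (\<Sum>\<alpha>\<in>{1..r}. cpd ix (bidx m \<alpha> 1) (eb j) u) = 0"
    and Cl: "\<forall>u\<in>U. \<forall>i\<in>{1..CARD('n)}. \<forall>j\<in>{1..CARD('n)}. cpd ix i (eb j) u = cpd ix j (eb i) u"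
    and u2: "\<forall>u\<in>U. u $ ix 2 \<noteq> 0"
begin

interpretation blocks m r "CARD('n)" by (rule bl)


lemma bidx1 [simp]: "bidx m 1 a = a" by (simp add: bidx_def)
lemma bidx1' [simp]: "bidx m (Suc 0) a = a" by (simp add: bidx_def)

lemma n2: "CARD('n) \<ge> 2"
proof -
  have "m 1 \<le> (\<Sum>\<alpha>\<in>{1..r}. m \<alpha>)" using r by (intro member_le_sum) auto
  then show ?thesis using m_sum m1 by simp
qed

lemma N12: "1 \<in> {1..CARD('n)}" "2 \<in> {1..CARD('n)}" using n2 by auto

lemma ix12: "ix 1 \<noteq> ix 2" using ix_eq[OF ix N12] by simp
lemma ix12' [simp]: "ix (Suc 0) \<noteq> ix 2" "ix 2 \<noteq> ix (Suc 0)" "ix 1 \<noteq> ix 2" "ix 2 \<noteq> ix 1" using ix12 by auto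

lemma ix_surj: "\<exists>i\<in>{1..CARD('n)}. k = ix i"
  using ix unfolding bij_betw_def by auto

lemma inv_ix: "inv_into {1..CARD('n)} ix k \<in> {1..CARD('n)}" "ix (inv_into {1..CARD('n)} ix k) = k"
proof -
  have "k \<in> ix ` {1..CARD('n)}" using ix unfolding bij_betw_def by simp
  then show "inv_into {1..CARD('n)} ix k \<in> {1..CARD('n)}" "ix (inv_into {1..CARD('n)} ix k) = k"
    by (rule inv_into_into, rule f_inv_into_f)
qed

lemma b1N: "\<alpha> \<in> {1..r} \<Longrightarrow> bidx m \<alpha> 1 \<in> {1..CARD('n)}"
  using bidx_range[of \<alpha> 1] m_pos by auto

lemma b1ge3: "\<alpha> \<in> {2..r} \<Longrightarrow> bidx m \<alpha> 1 \<ge> 3"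
proof -
  assume a: "\<alpha> \<in> {2..r}"
  have "T 2 \<le> T \<alpha>" using a by (intro T_mono) auto
  moreover have "T 2 = m 1" using T_Suc[of 1] T_1 by (simp add: numeral_2_eq_2)
  ultimately show ?thesis using m1 by (simp add: bidx_T)
qed

lemma b1_eq1: "\<alpha> \<in> {1..r} \<Longrightarrow> bidx m \<alpha> 1 = 1 \<longleftrightarrow> \<alpha> = 1"
  using b1ge3[of \<alpha>] by (cases "\<alpha> = 1") (auto simp: bidx1)

lemma b1_ne2: "\<alpha> \<in> {1..r} \<Longrightarrow> bidx m \<alpha> 1 \<noteq> 2"
  using b1ge3[of \<alpha>] by (cases "\<alpha> = 1") (auto simp: bidx1)

definition ev :: "real^'n" where "ev = (\<Sum>\<alpha>\<in>{1..r}. axis (ix (bidx m \<alpha> 1)) 1)"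

lemma ev_sum: "(\<Sum>k\<in>UNIV. ev $ k * X k) = (\<Sum>\<alpha>\<in>{1..r}. X (ix (bidx m \<alpha> 1)))"
proof -
  have "(\<Sum>k\<in>UNIV. ev $ k * X k) = (\<Sum>k\<in>UNIV. \<Sum>\<alpha>\<in>{1..r}. axis (ix (bidx m \<alpha> 1)) 1 $ k * X k)"
    by (simp add: ev_def sum_component sum_distrib_right)
  also have "\<dots> = (\<Sum>\<alpha>\<in>{1..r}. \<Sum>k\<in>UNIV. axis (ix (bidx m \<alpha> 1)) 1 $ k * X k)" by (rule sum.swap)
  also have "\<dots> = (\<Sum>\<alpha>\<in>{1..r}. X (ix (bidx m \<alpha> 1)))" by (simp only: sum_axis_pdv)
  finally show ?thesis .
qed

lemma ev_comp: "i \<in> {1..CARD('n)} \<Longrightarrow> ev $ ix i = (if \<exists>\<alpha>\<in>{1..r}. i = bidx m \<alpha> 1 then 1 else 0)"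
proof -
  assume i: "i \<in> {1..CARD('n)}"
  have "ev $ ix i = (\<Sum>\<alpha>\<in>{1..r}. if ix i = ix (bidx m \<alpha> 1) then 1 else 0)"
    by (simp add: ev_def sum_component axis_def)
  also have "\<dots> = (\<Sum>\<alpha>\<in>{1..r}. if bidx m \<alpha> 1 = i then 1 else 0)"
  proof (intro sum.cong refl)
    fix \<alpha> assume "\<alpha> \<in> {1..r}"
    then show "(if ix i = ix (bidx m \<alpha> 1) then 1 else (0::real)) = (if bidx m \<alpha> 1 = i then 1 else 0)"
      using ix_eq[OF ix i b1N[of \<alpha>]] by auto
  qed
  also have "\<dots> = (if \<exists>\<alpha>\<in>{1..r}. i = bidx m \<alpha> 1 then 1 else 0)"
  proof (cases "\<exists>\<alpha>\<in>{1..r}. i = bidx m \<alpha> 1")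
    case True
    then obtain \<beta> where \<beta>: "\<beta> \<in> {1..r}" "i = bidx m \<beta> 1" by blast
    have "(\<Sum>\<alpha>\<in>{1..r}. if bidx m \<alpha> 1 = i then 1 else (0::real)) = (\<Sum>\<alpha>\<in>{1..r}. if \<alpha> = \<beta> then 1 else 0)"
    proof (intro sum.cong refl)
      fix \<alpha> assume "\<alpha> \<in> {1..r}"
      then show "(if bidx m \<alpha> 1 = i then 1 else (0::real)) = (if \<alpha> = \<beta> then 1 else 0)"
        using bidx_inj[of \<alpha> 1 \<beta> 1] \<beta> m_pos by auto
    qed
    then show ?thesis using True \<beta>(1) by simp
  next
    case False then show ?thesis by (auto intro!: sum.neutral)
  qed
  finally show ?thesis .
qed

lemma ev1: "ev $ ix 1 = 1" using ev_comp[OF N12(1)] r by (auto simp: bidx1 intro!: bexI[of _ 1])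
lemma ev2: "ev $ ix 2 = 0" using ev_comp[OF N12(2)] b1_ne2 by auto


lemma E': "y \<in> U \<Longrightarrow> j \<in> {1..CARD('n)} \<Longrightarrow> (\<Sum>k\<in>UNIV. y $ k * pdv k (eb j) y) = - d * eb j y"
  using Eul sum_ix[OF ix, of "\<lambda>k. y $ k * pdv k (eb j) y"] by (simp add: cpd_def)

lemma I': "y \<in> U \<Longrightarrow> j \<in> {1..CARD('n)} \<Longrightarrow> (\<Sum>k\<in>UNIV. ev $ k * pdv k (eb j) y) = 0"
  using Inv by (simp add: ev_sum cpd_def)

lemma Cl': "y \<in> U \<Longrightarrow> i \<in> {1..CARD('n)} \<Longrightarrow> j \<in> {1..CARD('n)} \<Longrightarrow> pdv (ix i) (eb j) y = pdv (ix j) (eb i) y"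
  using Cl by (simp add: cpd_def)

lemma Kcol: "y \<in> U \<Longrightarrow> (\<Sum>\<alpha>\<in>{1..r}. pdv k (eb (bidx m \<alpha> 1)) y) = 0"
proof -
  assume y: "y \<in> U"
  obtain i where i: "i \<in> {1..CARD('n)}" "k = ix i" using ix_surj by blast
  have "(\<Sum>\<alpha>\<in>{1..r}. pdv k (eb (bidx m \<alpha> 1)) y) = (\<Sum>\<alpha>\<in>{1..r}. pdv (ix (bidx m \<alpha> 1)) (eb i) y)"
    unfolding i(2) by (intro sum.cong refl) (use Cl'[OF y i(1) b1N] in auto)
  also have "\<dots> = 0" using Inv y i(1) by (simp add: cpd_def)
  finally show ?thesis .
qed

definition Kf :: "real^'n \<Rightarrow> real" where "Kf u = (\<Sum>\<alpha>\<in>{1..r}. eb (bidx m \<alpha> 1) u)"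

lemma K_deriv: "u \<in> U \<Longrightarrow> (Kf has_derivative (\<lambda>h. 0)) (at u)"
proof -
  assume u: "u \<in> U"
  have "(Kf has_derivative (\<lambda>h. \<Sum>\<alpha>\<in>{1..r}. \<Sum>k\<in>UNIV. h$k * pdv k (eb (bidx m \<alpha> 1)) u)) (at u)"
    unfolding Kf_def[abs_def]
    by (intro has_derivative_sum smooth_frechet[OF oU _ u]) (use smE b1N in auto)
  moreover have "(\<lambda>h. \<Sum>\<alpha>\<in>{1..r}. \<Sum>k\<in>UNIV. h$k * pdv k (eb (bidx m \<alpha> 1)) u) = (\<lambda>h. 0)"
  proof
    fix h :: "real^'n"
    have "(\<Sum>\<alpha>\<in>{1..r}. \<Sum>k\<in>UNIV. h$k * pdv k (eb (bidx m \<alpha> 1)) u) = (\<Sum>k\<in>UNIV. h$k * (\<Sum>\<alpha>\<in>{1..r}. pdv k (eb (bidx m \<alpha> 1)) u))"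
      unfolding sum_distrib_left by (rule sum.swap)
    also have "\<dots> = 0" using Kcol[OF u] by simp
    finally show "(\<Sum>\<alpha>\<in>{1..r}. \<Sum>k\<in>UNIV. h$k * pdv k (eb (bidx m \<alpha> 1)) u) = 0" .
  qed
  ultimately show ?thesis by simp
qed

lemma dK0: "u \<in> U \<Longrightarrow> d * Kf u = 0"
proof -
  assume u: "u \<in> U"
  have "(\<Sum>\<alpha>\<in>{1..r}. \<Sum>k\<in>UNIV. u $ k * pdv k (eb (bidx m \<alpha> 1)) u) = (\<Sum>\<alpha>\<in>{1..r}. - d * eb (bidx m \<alpha> 1) u)"
    by (intro sum.cong refl E'[OF u b1N]) 
  moreover have "(\<Sum>\<alpha>\<in>{1..r}. \<Sum>k\<in>UNIV. u $ k * pdv k (eb (bidx m \<alpha> 1)) u) = (\<Sum>k\<in>UNIV. u$k * (\<Sum>\<alpha>\<in>{1..r}. pdv k (eb (bidx m \<alpha> 1)) u))"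
    unfolding sum_distrib_left by (rule sum.swap)
  moreover have "(\<Sum>k\<in>UNIV. u$k * (\<Sum>\<alpha>\<in>{1..r}. pdv k (eb (bidx m \<alpha> 1)) u)) = 0" using Kcol[OF u] by simp
  moreover have "(\<Sum>\<alpha>\<in>{1..r}. - d * eb (bidx m \<alpha> 1) u) = - (d * Kf u)" by (simp add: Kf_def sum_distrib_left sum_negf)
  ultimately show ?thesis by linarith
qed


definition p1 where "p1 = p $ ix 1"
definition p2 where "p2 = p $ ix 2"
lemma p2nz: "p2 \<noteq> 0" using u2 pU by (simp add: p2_def)

definition Pj :: "real^'n \<Rightarrow> real^'n" where
  "Pj w = w - (w $ ix 1) *\<^sub>R axis (ix 1) 1 - (w $ ix 2) *\<^sub>R axis (ix 2) 1"
definition sig :: "real^'n \<Rightarrow> real^'n" where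
  "sig w = p2 *\<^sub>R Pj w + p1 *\<^sub>R ev + p2 *\<^sub>R axis (ix 2) 1"

lemma Pj_comp: "Pj w $ z = (if z = ix 1 \<or> z = ix 2 then 0 else w $ z)"
  using ix12 by (auto simp: Pj_def axis_def)

lemma sig_comp: "sig w $ z = p2 * (if z = ix 1 \<or> z = ix 2 then 0 else w $ z) + p1 * ev $ z + (if z = ix 2 then p2 else 0)"
  by (simp add: sig_def Pj_comp axis_def)

lemma sig_shift: "sig (w + t *\<^sub>R axis k 1) = sig w + (if k = ix 1 \<or> k = ix 2 then 0 else (p2 * t) *\<^sub>R axis k 1)"
  unfolding vec_eq_iff by (auto simp: sig_comp axis_def algebra_simps)

lemma sig_affine: "a + b = 1 \<Longrightarrow> sig (a *\<^sub>R x + b *\<^sub>R y) = a *\<^sub>R sig x + b *\<^sub>R sig y"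
proof -
  assume "a + b = 1"
  then have b: "b = 1 - a" by simp
  show ?thesis unfolding vec_eq_iff b by (auto simp: sig_comp algebra_simps)
qed

lemma sig_cont: "continuous_on S sig"
  unfolding sig_def Pj_def by (intro continuous_intros)


lemma zmap_comp:
  assumes i: "i \<in> {1..CARD('n)}"
  shows "zmap ix m r u $ ix i = (if 3 \<le> i then (u $ ix i - dh_delta m r (i - 2) * u $ ix 1) / u $ ix 2 else 0)"
proof -
  define c where "c j = (u $ ix (j + 2) - dh_delta m r j * u $ ix 1) / u $ ix 2" for j
  have "zmap ix m r u $ ix i = (\<Sum>j\<in>{1..CARD('n) - 2}. c j * (axis (ix (j + 2)) 1 $ ix i))"
    by (simp add: zmap_def c_def sum_component)
  also have "\<dots> = (\<Sum>j\<in>{1..CARD('n) - 2}. if j = i - 2 then (if 3 \<le> i then c j else 0) else 0)"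
  proof (intro sum.cong refl)
    fix j assume j: "j \<in> {1..CARD('n) - 2}"
    then have j2: "j + 2 \<in> {1..CARD('n)}" using n2 by auto
    have "ix i = ix (j + 2) \<longleftrightarrow> i = j + 2" by (rule ix_eq[OF ix i j2])
    then show "c j * (axis (ix (j + 2)) 1 $ ix i) = (if j = i - 2 then (if 3 \<le> i then c j else 0) else 0)"
      using j by (auto simp: axis_def)
  qed
  also have "\<dots> = (if 3 \<le> i then c (i - 2) else 0)"
    using i by (auto simp: sum.delta)
  also have "\<dots> = (if 3 \<le> i then (u $ ix i - dh_delta m r (i - 2) * u $ ix 1) / u $ ix 2 else 0)"
  proof (cases "3 \<le> i")
    case True
    then have "i - 2 + 2 = i" by arith
    then show ?thesis using True by (simp only: c_def if_True)
  qed simp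
  finally show ?thesis .
qed

lemma ev_delta:
  assumes i: "i \<in> {1..CARD('n)}" and i3: "3 \<le> i"
  shows "dh_delta m r (i - 2) = ev $ ix i"
proof -
  have i22: "i - 2 + 2 = i" using i3 by arith
  have "(\<exists>\<alpha>\<in>{2..r}. i - 2 + 2 = bidx m \<alpha> 1) \<longleftrightarrow> (\<exists>\<alpha>\<in>{1..r}. i = bidx m \<alpha> 1)"
    unfolding i22
  proof
    assume "\<exists>\<alpha>\<in>{2..r}. i = bidx m \<alpha> 1" then show "\<exists>\<alpha>\<in>{1..r}. i = bidx m \<alpha> 1" by auto
  next
    assume "\<exists>\<alpha>\<in>{1..r}. i = bidx m \<alpha> 1"
    then obtain \<alpha> where a: "\<alpha> \<in> {1..r}" "i = bidx m \<alpha> 1" by blast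
    have "\<alpha> \<noteq> 1" using a i3 by auto
    then show "\<exists>\<alpha>\<in>{2..r}. i = bidx m \<alpha> 1" using a by (intro bexI[of _ \<alpha>]) auto
  qed
  then show ?thesis using ev_comp[OF i] by (simp add: dh_delta_def)
qed

lemma sig_zmap:
  assumes u: "u $ ix 2 \<noteq> 0"
  shows "sig (zmap ix m r u) = (p2 / u $ ix 2) *\<^sub>R u + (p1 - (p2 / u $ ix 2) * u $ ix 1) *\<^sub>R ev"
  unfolding vec_eq_iff
proof
  fix z
  obtain i where i: "i \<in> {1..CARD('n)}" "z = ix i" using ix_surj by blast
  show "sig (zmap ix m r u) $ z = ((p2 / u $ ix 2) *\<^sub>R u + (p1 - (p2 / u $ ix 2) * u $ ix 1) *\<^sub>R ev) $ z"
  proof (cases "i = 1")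
    case True then show ?thesis using i ev1 by (simp add: sig_comp algebra_simps)
  next
    case n1: False
    show ?thesis
    proof (cases "i = 2")
      case True then show ?thesis using i ev2 u by (simp add: sig_comp)
    next
      case False
      then have i3: "3 \<le> i" using n1 i by auto
      have ne: "ix i \<noteq> ix 1" "ix i \<noteq> ix 2" using ix_eq[OF ix i(1) N12(1)] ix_eq[OF ix i(1) N12(2)] n1 False by auto
      show ?thesis using i u ne
        by (simp add: sig_comp zmap_comp[OF i(1)] i3 ev_delta[OF i(1) i3] field_simps)
    qed
  qed
qed


definition R :: real where "R = (SOME R. R > 0 \<and> ball p R \<subseteq> U)"
lemma R: "R > 0" "ball p R \<subseteq> U"
proof -
  have "\<exists>R. R > 0 \<and> ball p R \<subseteq> U" using oU pU open_contains_ball by blast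
  then have "R > 0 \<and> ball p R \<subseteq> U" unfolding R_def by (rule someI_ex)
  then show "R > 0" "ball p R \<subseteq> U" by auto
qed

definition W :: "(real^'n) set" where "W = {w. sig w \<in> ball p R}"
definition V :: "(real^'n) set" where "V = {u. u \<in> ball p R \<and> u $ ix 2 * p2 > 0 \<and> sig (zmap ix m r u) \<in> ball p R}"
definition a0 :: "real^'n" where "a0 = zmap ix m r p"

lemma sig_a0: "sig a0 = p"
  using sig_zmap[of p] p2nz by (simp add: a0_def p1_def p2_def)

lemma W_open: "open W"
proof -
  have "open (UNIV \<inter> sig -` ball p R)" by (rule continuous_open_preimage[OF sig_cont]) auto
  then show ?thesis by (simp add: W_def vimage_def)
qed

lemma W_convex: "convex W"
proof (rule convexI)
  fix x y :: "real^'n" and u v :: real assume x: "x \<in> W" and y: "y \<in> W" and uv: "0 \<le> u" "0 \<le> v" "u + v = 1"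
  have "u *\<^sub>R sig x + v *\<^sub>R sig y \<in> ball p R"
    using x y uv convex_ball[of p R] unfolding W_def convex_def by blast
  then show "u *\<^sub>R x + v *\<^sub>R y \<in> W" using sig_affine[OF uv(3)] by (simp add: W_def)
qed
lemma a0W: "a0 \<in> W" using sig_a0 R by (simp add: W_def)
lemma sigW: "w \<in> W \<Longrightarrow> sig w \<in> U" using R by (auto simp: W_def)
lemma sigWB: "w \<in> W \<Longrightarrow> sig w \<in> ball p R" by (simp add: W_def)

lemma zmap_cont: "continuous_on {u. u $ ix 2 * p2 > 0} (zmap ix m r)"
proof -
  have "continuous_on {u. u $ ix 2 * p2 > 0}
     (\<lambda>u. \<Sum>j\<in>{1..CARD('n) - 2}. ((u $ ix (j + 2) - dh_delta m r j * u $ ix 1) / u $ ix 2) *\<^sub>R axis (ix (j + 2)) (1::real))"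
    by (intro continuous_intros) auto
  then show ?thesis unfolding zmap_def[abs_def] by simp
qed

lemma V_open: "open V"
proof -
  define D where "D = {u::real^'n. u $ ix 2 * p2 > 0}"
  have oD: "open D" unfolding D_def by (intro open_Collect_less continuous_intros)
  have c: "continuous_on D (sig \<circ> zmap ix m r)"
    using continuous_on_compose[OF zmap_cont[folded D_def] sig_cont] .
  have "open (D \<inter> (sig \<circ> zmap ix m r) -` ball p R)" by (rule continuous_open_preimage[OF c oD]) auto
  then have "open (ball p R \<inter> (D \<inter> (sig \<circ> zmap ix m r) -` ball p R))" by auto
  moreover have "V = ball p R \<inter> (D \<inter> (sig \<circ> zmap ix m r) -` ball p R)" by (auto simp: V_def D_def)
  ultimately show ?thesis by simp
qed

lemma pV: "p \<in> V"
proof -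
  have "sig (zmap ix m r p) = p" using sig_a0 by (simp add: a0_def)
  moreover have "p $ ix 2 * p $ ix 2 > 0" using p2nz not_real_square_gt_zero unfolding p2_def by blast
  ultimately show ?thesis using R by (simp add: V_def p2_def)
qed
lemma VU: "V \<subseteq> U" using R by (auto simp: V_def)
lemma zV: "zmap ix m r ` V \<subseteq> W" by (auto simp: V_def W_def)


lemma PD:
  assumes g: "smooth_on U g" and w: "w \<in> W"
  shows "((\<lambda>t. c * g (sig (w + t *\<^sub>R axis k 1))) has_field_derivative
          (if k = ix 1 \<or> k = ix 2 then 0 else c * p2 * pdv k g (sig w))) (at 0)"
proof (cases "k = ix 1 \<or> k = ix 2")
  case True
  then have "(\<lambda>t. c * g (sig (w + t *\<^sub>R axis k 1))) = (\<lambda>t. c * g (sig w))" by (simp add: sig_shift)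
  then show ?thesis using True by simp
next
  case False
  have sw: "sig w \<in> U" using sigW[OF w] .
  have dif: "(\<lambda>t. g (sig w + t *\<^sub>R axis k 1)) differentiable (at 0)"
    using smooth_on_props(2)[OF g] sw by blast
  have d1: "((\<lambda>s. g (sig w + s *\<^sub>R axis k 1)) has_field_derivative pdv k g (sig w)) (at (p2 * 0))"
    using pdv_DERIV[OF dif] by simp
  have d2: "((\<lambda>t. p2 * t) has_field_derivative p2) (at 0)"
    using DERIV_cmult_right[OF DERIV_ident, of p2 0] by simp
  have "((\<lambda>t. g (sig w + (p2 * t) *\<^sub>R axis k 1)) has_field_derivative pdv k g (sig w) * p2) (at 0)"
    using DERIV_chain2[OF d1 d2] .
  then have "((\<lambda>t. c * g (sig w + (p2 * t) *\<^sub>R axis k 1)) has_field_derivative c * (pdv k g (sig w) * p2)) (at 0)"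
    by (rule DERIV_cmult)
  moreover have "(\<lambda>t. c * g (sig (w + t *\<^sub>R axis k 1))) = (\<lambda>t. c * g (sig w + (p2 * t) *\<^sub>R axis k 1))"
    using False by (simp add: sig_shift)
  ultimately show ?thesis using False by (simp add: mult_ac)
qed

lemma PD_diff: "smooth_on U g \<Longrightarrow> w \<in> W \<Longrightarrow> (\<lambda>t. c * g (sig (w + t *\<^sub>R axis k 1))) differentiable (at 0)"
  using PD real_differentiable_def by blast

lemma PD_pdv: "smooth_on U g \<Longrightarrow> w \<in> W \<Longrightarrow>
   pdv k (\<lambda>w. c * g (sig w)) w = (if k = ix 1 \<or> k = ix 2 then 0 else c * p2 * pdv k g (sig w))"
  unfolding pdv_def[of k "\<lambda>w. c * g (sig w)"] by (rule DERIV_imp_deriv[OF PD])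

definition TF :: "(real^'n \<Rightarrow> real) set" where
  "TF = {h. \<exists>c g. smooth_on U g \<and> h = (\<lambda>w. c * g (sig w))}"

lemma TF_props:
  assumes "h \<in> TF"
  shows "continuous_on W h \<and> (\<forall>k. \<forall>u\<in>W. (\<lambda>t. h (u + t *\<^sub>R axis k 1)) differentiable (at 0))
              \<and> (\<forall>k. \<exists>g'\<in>TF. \<forall>w\<in>W. pdv k h w = g' w)"
proof -
  obtain c g where g: "smooth_on U g" and h: "h = (\<lambda>w. c * g (sig w))" using assms by (auto simp: TF_def)
  have "continuous_on W (\<lambda>w. g (sig w))"
    by (rule continuous_on_compose2[OF smooth_on_props(1)[OF g] sig_cont]) (use sigW in auto)
  then have c1: "continuous_on W h" unfolding h by (intro continuous_intros)
  have c2: "\<forall>k. \<forall>u\<in>W. (\<lambda>t. h (u + t *\<^sub>R axis k 1)) differentiable (at 0)"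
    unfolding h using PD_diff[OF g] by blast
  have c3: "\<exists>g'\<in>TF. \<forall>w\<in>W. pdv k h w = g' w" for k
  proof (cases "k = ix 1 \<or> k = ix 2")
    case True
    have "(\<lambda>w. 0 * g (sig w)) \<in> TF" unfolding TF_def using g by blast
    moreover have "\<forall>w\<in>W. pdv k h w = 0 * g (sig w)" unfolding h using PD_pdv[OF g] True by simp
    ultimately show ?thesis by (intro bexI[where x="\<lambda>w. 0 * g (sig w)"]) auto
  next
    case False
    have "(\<lambda>w. (c * p2) * pdv k g (sig w)) \<in> TF"
      using smooth_on_props(4)[OF g] unfolding TF_def by blast
    moreover have "\<forall>w\<in>W. pdv k h w = (c * p2) * pdv k g (sig w)" unfolding h using PD_pdv[OF g] False by simp
    ultimately show ?thesis by (intro bexI[where x="\<lambda>w. (c * p2) * pdv k g (sig w)"]) auto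
  qed
  show ?thesis using c1 c2 c3 by blast
qed

lemma TF_smooth: "h \<in> TF \<Longrightarrow> smooth_on W h"
  by (rule smooth_onI'[OF W_open _ TF_props])


definition cc :: real where "cc = \<bar>p2\<bar> powr d"
definition F :: "nat \<Rightarrow> real^'n \<Rightarrow> real" where "F i w = cc * eb i (sig w)"

lemma F_TF: "i \<in> {1..CARD('n)} \<Longrightarrow> F i \<in> TF"
  unfolding TF_def F_def[abs_def] using smE by blast

definition Phi :: "'n \<Rightarrow> real^'n \<Rightarrow> real" where
  "Phi k = (if k = ix 1 \<or> k = ix 2 then (\<lambda>w. 0 * eb 1 (sig w)) else F (inv_into {1..CARD('n)} ix k))"

lemma Phi_TF: "Phi k \<in> TF"
proof (cases "k = ix 1 \<or> k = ix 2")
  case True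
  have s1: "smooth_on U (eb 1)" using smE N12 by blast
  have "Phi k = (\<lambda>w. 0 * eb 1 (sig w))" using True by (simp add: Phi_def)
  then show ?thesis unfolding TF_def using s1 by blast
next
  case False then show ?thesis unfolding Phi_def using F_TF[OF inv_ix(1)] by simp
qed

lemma Phi_pdv:
  assumes w: "w \<in> W"
  shows "pdv i (Phi k) w = (if i = ix 1 \<or> i = ix 2 \<or> k = ix 1 \<or> k = ix 2 then 0
           else cc * p2 * pdv i (eb (inv_into {1..CARD('n)} ix k)) (sig w))"
proof (cases "k = ix 1 \<or> k = ix 2")
  case True
  then have "Phi k = (\<lambda>w. 0 * eb 1 (sig w))" by (simp add: Phi_def)
  moreover have "smooth_on U (eb 1)" using smE N12 by blast
  ultimately show ?thesis using PD_pdv[OF _ w, where g="eb 1" and c=0 and k=i] True by auto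
next
  case False
  then have "Phi k = (\<lambda>w. cc * eb (inv_into {1..CARD('n)} ix k) (sig w))" by (simp add: Phi_def F_def[abs_def])
  moreover have "smooth_on U (eb (inv_into {1..CARD('n)} ix k))" using smE inv_ix(1) by blast
  ultimately show ?thesis using PD_pdv[OF _ w, where g="eb (inv_into {1..CARD('n)} ix k)" and c=cc and k=i] False by auto
qed

lemma Phi_closed:
  assumes w: "w \<in> W"
  shows "pdv i (Phi k) w = pdv k (Phi i) w"
proof (cases "i = ix 1 \<or> i = ix 2 \<or> k = ix 1 \<or> k = ix 2")
  case True then show ?thesis using Phi_pdv[OF w] by auto
next
  case False
  define a where "a = inv_into {1..CARD('n)} ix i"
  define b where "b = inv_into {1..CARD('n)} ix k"
  have a: "a \<in> {1..CARD('n)}" "ix a = i" using inv_ix[of i] by (auto simp: a_def)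
  have b: "b \<in> {1..CARD('n)}" "ix b = k" using inv_ix[of k] by (auto simp: b_def)
  have "pdv i (eb b) (sig w) = pdv k (eb a) (sig w)"
    using Cl'[OF sigW[OF w] a(1) b(1)] a(2) b(2) by simp
  then show ?thesis using Phi_pdv[OF w, of i k] Phi_pdv[OF w, of k i] False by (simp add: a_def b_def)
qed

definition f :: "real^'n \<Rightarrow> real" where
  "f w = integral (cbox 0 1) (\<lambda>t::real. \<Sum>j\<in>UNIV. (w - a0)$j * Phi j (a0 + t *\<^sub>R (w - a0)))"

lemma f_deriv: "w \<in> W \<Longrightarrow> ((\<lambda>x. f (w + x *\<^sub>R axis k 1)) has_field_derivative Phi k w) (at 0)"
  unfolding f_def
  by (rule poincare[OF W_open W_convex a0W TF_smooth[OF Phi_TF] Phi_closed])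

lemma f_pdv: "w \<in> W \<Longrightarrow> pdv k f w = Phi k w"
  unfolding pdv_def by (rule DERIV_imp_deriv[OF f_deriv])

lemma f_diff: "w \<in> W \<Longrightarrow> (\<lambda>t. f (w + t *\<^sub>R axis k 1)) differentiable (at 0)"
  using f_deriv real_differentiable_def by blast

lemma f_cont: "continuous_on W f"
proof -
  have cp: "continuous_on W (pdv k f)" for k
  proof -
    have "continuous_on W (Phi k)" using TF_props[OF Phi_TF] by blast
    then show ?thesis using continuous_on_cong[OF refl, of W "pdv k f" "Phi k"] f_pdv by auto
  qed
  have "(f has_derivative (\<lambda>h. \<Sum>k\<in>UNIV. h$k * pdv k f w)) (at w)" if "w \<in> W" for w
    by (rule partials_frechet[OF W_open that]) (use f_diff cp in auto)
  then show ?thesis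
    by (intro continuous_at_imp_continuous_on ballI) (auto dest: has_derivative_continuous)
qed

lemma f_smooth: "smooth_on W f"
proof (rule smooth_onI'[OF W_open, of f "insert f TF"])
  fix g assume "g \<in> insert f TF"
  then show "continuous_on W g \<and> (\<forall>k. \<forall>u\<in>W. (\<lambda>t. g (u + t *\<^sub>R axis k 1)) differentiable (at 0))
              \<and> (\<forall>k. \<exists>g'\<in>insert f TF. \<forall>w\<in>W. pdv k g w = g' w)"
  proof
    assume gf: "g = f"
    have "\<forall>k. \<exists>g'\<in>insert f TF. \<forall>w\<in>W. pdv k g w = g' w"
    proof
      fix k show "\<exists>g'\<in>insert f TF. \<forall>w\<in>W. pdv k g w = g' w"
        using Phi_TF[of k] f_pdv unfolding gf by (intro bexI[where x="Phi k"]) auto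
    qed
    then show ?thesis using f_cont f_diff gf by blast
  next
    assume "g \<in> TF"
    then show ?thesis using TF_props by blast
  qed
qed simp


lemma E'': "\<forall>y\<in>U. (\<Sum>k\<in>UNIV. y $ k * pdv k (eb j) y) = - d * eb j y" if "j \<in> {1..CARD('n)}"
  using E' that by blast
lemma I'': "\<forall>y\<in>U. (\<Sum>k\<in>UNIV. ev $ k * pdv k (eb j) y) = 0" if "j \<in> {1..CARD('n)}"
  using I' that by blast

lemma eb_V:
  assumes u: "u \<in> V" and i: "i \<in> {1..CARD('n)}"
  shows "eb i u = \<bar>u $ ix 2\<bar> powr (- d) * F i (zmap ix m r u)"
proof -
  define lam where "lam = p2 / u $ ix 2"
  define \<mu> where "\<mu> = p1 - lam * u $ ix 1"
  have uB: "u \<in> ball p R" and up: "u $ ix 2 * p2 > 0" and qB: "sig (zmap ix m r u) \<in> ball p R"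
    using u by (auto simp: V_def)
  have u2nz: "u $ ix 2 \<noteq> 0" using up by auto
  have lam: "lam > 0" using up unfolding lam_def
    by (auto simp: zero_less_divide_iff zero_less_mult_iff)
  have q: "sig (zmap ix m r u) = lam *\<^sub>R u + \<mu> *\<^sub>R ev" using sig_zmap[OF u2nz] by (simp add: lam_def \<mu>_def)
  have path: "\<forall>t\<in>{0..1}. u + t *\<^sub>R ((lam - 1) *\<^sub>R u + \<mu> *\<^sub>R ev) \<in> U"
  proof
    fix t :: real assume t: "t \<in> {0..1}"
    have "(1 - t) *\<^sub>R u + t *\<^sub>R (lam *\<^sub>R u + \<mu> *\<^sub>R ev) \<in> ball p R"
      using convex_ball[of p R] uB qB q t unfolding convex_def by auto
    moreover have "(1 - t) *\<^sub>R u + t *\<^sub>R (lam *\<^sub>R u + \<mu> *\<^sub>R ev) = u + t *\<^sub>R ((lam - 1) *\<^sub>R u + \<mu> *\<^sub>R ev)"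
      by (simp add: algebra_simps)
    ultimately show "u + t *\<^sub>R ((lam - 1) *\<^sub>R u + \<mu> *\<^sub>R ev) \<in> U" using R by auto
  qed
  have h: "eb i (lam *\<^sub>R u + \<mu> *\<^sub>R ev) = lam powr (- d) * eb i u"
    by (rule homog_path[OF oU _ E''[OF i] I''[OF i] lam path]) (use smE i in blast)
  have lamabs: "lam = \<bar>p2\<bar> / \<bar>u $ ix 2\<bar>"
    using lam unfolding lam_def by (metis abs_divide abs_of_pos)
  have A: "\<bar>p2\<bar> powr d > 0" "\<bar>u $ ix 2\<bar> powr d > 0" using p2nz u2nz by auto
  have "\<bar>u $ ix 2\<bar> powr (- d) * F i (zmap ix m r u) = \<bar>u $ ix 2\<bar> powr (- d) * (\<bar>p2\<bar> powr d * (lam powr (- d) * eb i u))"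
    by (simp add: F_def cc_def q h)
  also have "\<dots> = eb i u"
    unfolding lamabs powr_minus powr_divide using A by (simp add: field_simps)
  finally show ?thesis by simp
qed

lemma K_const: "y \<in> ball p R \<Longrightarrow> Kf y = Kf p"
proof -
  assume y: "y \<in> ball p R"
  have "\<exists>c. \<forall>x\<in>ball p R. Kf x = c"
  proof (rule has_derivative_zero_constant[OF convex_ball])
    fix x assume "x \<in> ball p R"
    then have "x \<in> U" using R by auto
    then show "(Kf has_derivative (\<lambda>h. 0)) (at x within ball p R)"
      using K_deriv has_derivative_at_withinI by blast
  qed
  then obtain c where "\<forall>x\<in>ball p R. Kf x = c" by blast
  then show ?thesis using y R(1) by simp
qed

definition C1 :: real where "C1 = cc * Kf p"

lemma F_sum: "w \<in> W \<Longrightarrow> (\<Sum>\<alpha>\<in>{1..r}. F (bidx m \<alpha> 1) w) = C1"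
proof -
  assume w: "w \<in> W"
  have "(\<Sum>\<alpha>\<in>{1..r}. F (bidx m \<alpha> 1) w) = cc * Kf (sig w)" by (simp add: F_def Kf_def sum_distrib_left)
  then show ?thesis using K_const[OF sigWB[OF w]] by (simp add: C1_def)
qed

lemma C1_zero: "d \<noteq> 0 \<Longrightarrow> C1 = 0"
  using dK0[OF pU] by (simp add: C1_def)

lemma Phi_ix: "j \<in> {1..CARD('n)} \<Longrightarrow> 3 \<le> j \<Longrightarrow> Phi (ix j) = F j"
proof -
  assume j: "j \<in> {1..CARD('n)}" "3 \<le> j"
  have "ix j \<noteq> ix 1" "ix j \<noteq> ix 2" using ix_eq[OF ix j(1) N12(1)] ix_eq[OF ix j(1) N12(2)] j(2) by auto
  then show ?thesis using ix_inv[OF ix j(1)] by (simp add: Phi_def)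
qed

lemma dz_f: "w \<in> W \<Longrightarrow> j \<in> {3..CARD('n)} \<Longrightarrow> dz ix (j - 2) f w = F j w"
proof -
  assume w: "w \<in> W" and j: "j \<in> {3..CARD('n)}"
  have "j - 2 + 2 = j" using j by auto
  then have "dz ix (j - 2) f w = pdv (ix j) f w" by (simp add: dz_def)
  also have "\<dots> = Phi (ix j) w" by (rule f_pdv[OF w])
  also have "\<dots> = F j w" using Phi_ix[of j] j by auto
  finally show ?thesis .
qed


definition G :: "real^'n \<Rightarrow> real" where
  "G w = F 2 w + (\<Sum>k\<in>UNIV. Pj w $ k * Phi k w) + (d - 1) * f w"

lemma Phi_set0: "k = ix 1 \<or> k = ix 2 \<Longrightarrow> Phi k w = 0"
  by (auto simp: Phi_def)

lemma bracket0:
  assumes w: "w \<in> W"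
  shows "pdv i (F 2) w + d * Phi i w + (\<Sum>k\<in>UNIV. Pj w $ k * pdv i (Phi k) w) = 0"
proof (cases "i = ix 1 \<or> i = ix 2")
  case True
  have "pdv i (F 2) w = 0"
    using PD_pdv[OF _ w, where g="eb 2" and c=cc and k=i] smE N12 True by (auto simp: F_def[abs_def])
  moreover have "Phi i w = 0" using Phi_set0 True by blast
  moreover have "pdv i (Phi k) w = 0" for k using Phi_pdv[OF w, of i k] True by auto
  ultimately show ?thesis by simp
next
  case False
  define a where "a = inv_into {1..CARD('n)} ix i"
  have a: "a \<in> {1..CARD('n)}" "ix a = i" using inv_ix[of i] by (auto simp: a_def)
  define y where "y = sig w"
  have yU: "y \<in> U" using sigW[OF w] by (simp add: y_def)
  define D where "D k = pdv k (eb a) y" for k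
  have PhiI: "Phi i w = cc * eb a y" using False by (simp add: Phi_def F_def a_def y_def)
  have F2: "pdv i (F 2) w = cc * p2 * D (ix 2)"
  proof -
    have "pdv i (F 2) w = cc * p2 * pdv i (eb 2) y"
      using PD_pdv[OF _ w, where g="eb 2" and c=cc and k=i] smE N12 False by (auto simp: F_def[abs_def] y_def)
    also have "pdv i (eb 2) y = D (ix 2)" using Cl'[OF yU a(1) N12(2)] a(2) by (simp add: D_def)
    finally show ?thesis .
  qed
  have S: "(\<Sum>k\<in>UNIV. Pj w $ k * pdv i (Phi k) w) = cc * p2 * (\<Sum>k\<in>UNIV. Pj w $ k * D k)"
  proof -
    have eqk: "Pj w $ k * pdv i (Phi k) w = cc * p2 * (Pj w $ k * D k)" for k
    proof (cases "k = ix 1 \<or> k = ix 2")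
      case True then show ?thesis by (auto simp: Pj_comp)
    next
      case kF: False
      define b where "b = inv_into {1..CARD('n)} ix k"
      have b: "b \<in> {1..CARD('n)}" "ix b = k" using inv_ix[of k] by (auto simp: b_def)
      have "pdv i (Phi k) w = cc * p2 * pdv i (eb b) y" using Phi_pdv[OF w, of i k] False kF by (simp add: b_def y_def)
      also have "pdv i (eb b) y = D k" using Cl'[OF yU a(1) b(1)] a(2) b(2) by (simp add: D_def)
      finally show ?thesis by simp
    qed
    have "(\<Sum>k\<in>UNIV. Pj w $ k * pdv i (Phi k) w) = (\<Sum>k\<in>UNIV. cc * p2 * (Pj w $ k * D k))"
      by (intro sum.cong refl eqk)
    also have "\<dots> = cc * p2 * (\<Sum>k\<in>UNIV. Pj w $ k * D k)" by (simp add: sum_distrib_left)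
    finally show ?thesis .
  qed
  have eul: "(\<Sum>k\<in>UNIV. y $ k * D k) = - d * eb a y" using E'[OF yU a(1)] by (simp add: D_def)
  have ev0: "(\<Sum>k\<in>UNIV. ev $ k * D k) = 0" using I'[OF yU a(1)] by (simp add: D_def)
  have yk: "y $ k = p2 * Pj w $ k + p1 * ev $ k + (if k = ix 2 then p2 else 0)" for k
    by (simp add: y_def sig_comp Pj_comp)
  have "(\<Sum>k\<in>UNIV. y $ k * D k) = p2 * (\<Sum>k\<in>UNIV. Pj w $ k * D k) + p1 * (\<Sum>k\<in>UNIV. ev $ k * D k) + p2 * D (ix 2)"
  proof -
    have "y $ k * D k = p2 * (Pj w $ k * D k) + p1 * (ev $ k * D k) + (if k = ix 2 then p2 * D k else 0)" for k
      by (simp add: yk algebra_simps)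
    then have "(\<Sum>k\<in>UNIV. y $ k * D k) = (\<Sum>k\<in>UNIV. p2 * (Pj w $ k * D k) + p1 * (ev $ k * D k) + (if k = ix 2 then p2 * D k else 0))"
      by (intro sum.cong refl)
    also have "\<dots> = p2 * (\<Sum>k\<in>UNIV. Pj w $ k * D k) + p1 * (\<Sum>k\<in>UNIV. ev $ k * D k) + (\<Sum>k\<in>UNIV. if k = ix 2 then p2 * D k else 0)"
      by (simp add: sum.distrib sum_distrib_left)
    also have "(\<Sum>k\<in>UNIV. if k = ix 2 then p2 * D k else 0) = p2 * D (ix 2)" by simp
    finally show ?thesis .
  qed
  then have "p2 * (\<Sum>k\<in>UNIV. Pj w $ k * D k) + p2 * D (ix 2) = - d * eb a y" using eul ev0 by simp
  then have "cc * p2 * D (ix 2) + cc * p2 * (\<Sum>k\<in>UNIV. Pj w $ k * D k) = - d * (cc * eb a y)"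
  proof -
    assume h: "p2 * (\<Sum>k\<in>UNIV. Pj w $ k * D k) + p2 * D (ix 2) = - d * eb a y"
    have "cc * (p2 * (\<Sum>k\<in>UNIV. Pj w $ k * D k) + p2 * D (ix 2)) = cc * (- d * eb a y)" unfolding h ..
    then show ?thesis by (simp add: algebra_simps)
  qed
  then show ?thesis using F2 S PhiI by (simp add: algebra_simps)
qed


lemma G_deriv:
  assumes w: "w \<in> W"
  shows "(G has_derivative (\<lambda>h. 0)) (at w)"
proof -
  have dF2: "(F 2 has_derivative (\<lambda>h. \<Sum>i\<in>UNIV. h$i * pdv i (F 2) w)) (at w)"
    by (rule smooth_frechet[OF W_open TF_smooth[OF F_TF[OF N12(2)]] w])
  have dPhi: "(Phi k has_derivative (\<lambda>h. \<Sum>i\<in>UNIV. h$i * pdv i (Phi k) w)) (at w)" for k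
    by (rule smooth_frechet[OF W_open TF_smooth[OF Phi_TF] w])
  have df: "(f has_derivative (\<lambda>h. \<Sum>i\<in>UNIV. h$i * pdv i f w)) (at w)"
    by (rule smooth_frechet[OF W_open f_smooth w])
  have dP: "((\<lambda>w. Pj w $ k) has_derivative (\<lambda>h. Pj h $ k)) (at w)" for k
  proof -
    have e: "(\<lambda>w. Pj w $ k) = (\<lambda>w. w $ k - w $ ix 1 * (axis (ix 1) 1 $ k) - w $ ix 2 * (axis (ix 2) (1::real) $ k))"
      by (rule ext) (simp add: Pj_def)
    have "bounded_linear (\<lambda>w::real^'n. w $ k - w $ ix 1 * (axis (ix 1) 1 $ k) - w $ ix 2 * (axis (ix 2) (1::real) $ k))"
      by (intro bounded_linear_sub bounded_linear_vec_nth bounded_linear_mult_const)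
    then show ?thesis unfolding e by (rule bounded_linear_imp_has_derivative)
  qed
  have dS: "((\<lambda>w. \<Sum>k\<in>UNIV. Pj w $ k * Phi k w) has_derivative
      (\<lambda>h. \<Sum>k\<in>UNIV. Pj w $ k * (\<Sum>i\<in>UNIV. h$i * pdv i (Phi k) w) + Pj h $ k * Phi k w)) (at w)"
    by (rule has_derivative_sum) (rule has_derivative_mult[OF dP dPhi])
  have dG: "(G has_derivative (\<lambda>h. (\<Sum>i\<in>UNIV. h$i * pdv i (F 2) w) +
      (\<Sum>k\<in>UNIV. Pj w $ k * (\<Sum>i\<in>UNIV. h$i * pdv i (Phi k) w) + Pj h $ k * Phi k w) +
      (d - 1) * (\<Sum>i\<in>UNIV. h$i * pdv i f w))) (at w)"
    unfolding G_def[abs_def] by (rule has_derivative_add[OF has_derivative_add[OF dF2 dS] has_derivative_mult_right[OF df]])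
  have "(\<Sum>i\<in>UNIV. h$i * pdv i (F 2) w) +
      (\<Sum>k\<in>UNIV. Pj w $ k * (\<Sum>i\<in>UNIV. h$i * pdv i (Phi k) w) + Pj h $ k * Phi k w) +
      (d - 1) * (\<Sum>i\<in>UNIV. h$i * pdv i f w) = 0" for h
  proof -
    have PP: "Pj h $ k * Phi k w = h $ k * Phi k w" for k
      using Phi_set0[of k w] by (auto simp: Pj_comp)
    have sw: "(\<Sum>k\<in>UNIV. Pj w $ k * (\<Sum>i\<in>UNIV. h$i * pdv i (Phi k) w)) = (\<Sum>i\<in>UNIV. h$i * (\<Sum>k\<in>UNIV. Pj w $ k * pdv i (Phi k) w))"
      unfolding sum_distrib_left by (subst sum.swap) (simp add: mult_ac)
    have fp: "(\<Sum>i\<in>UNIV. h$i * pdv i f w) = (\<Sum>i\<in>UNIV. h$i * Phi i w)" using f_pdv[OF w] by simp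
    have "(\<Sum>i\<in>UNIV. h$i * pdv i (F 2) w) +
      (\<Sum>k\<in>UNIV. Pj w $ k * (\<Sum>i\<in>UNIV. h$i * pdv i (Phi k) w) + Pj h $ k * Phi k w) +
      (d - 1) * (\<Sum>i\<in>UNIV. h$i * pdv i f w)
      = (\<Sum>i\<in>UNIV. h$i * (pdv i (F 2) w + d * Phi i w + (\<Sum>k\<in>UNIV. Pj w $ k * pdv i (Phi k) w)))"
      unfolding sum.distrib PP sw fp by (simp add: algebra_simps sum.distrib sum_distrib_left sum_subtractf)
    also have "\<dots> = 0" using bracket0[OF w] by simp
    finally show ?thesis .
  qed
  then show ?thesis using dG by simp
qed

lemma G_const: "w \<in> W \<Longrightarrow> G w = G a0"
proof -
  assume w: "w \<in> W"
  have "\<exists>c. \<forall>x\<in>W. G x = c"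
    by (rule has_derivative_zero_constant[OF W_convex]) (use G_deriv has_derivative_at_withinI in blast)
  then show ?thesis using w a0W by auto
qed

lemma Pj_sum: "(\<Sum>k\<in>UNIV. Pj w $ k * Phi k w) = (\<Sum>j\<in>{1..CARD('n) - 2}. w $ ix (j + 2) * F (j + 2) w)"
proof -
  have "(\<Sum>k\<in>UNIV. Pj w $ k * Phi k w) = (\<Sum>i\<in>{1..CARD('n)}. Pj w $ ix i * Phi (ix i) w)"
    by (rule sum_ix[OF ix])
  also have "\<dots> = (\<Sum>i\<in>{1..CARD('n)}. if 3 \<le> i then w $ ix i * F i w else 0)"
  proof (intro sum.cong refl)
    fix i assume i: "i \<in> {1..CARD('n)}"
    show "Pj w $ ix i * Phi (ix i) w = (if 3 \<le> i then w $ ix i * F i w else 0)"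
    proof (cases "3 \<le> i")
      case True
      have "ix i \<noteq> ix 1" "ix i \<noteq> ix 2" using ix_eq[OF ix i N12(1)] ix_eq[OF ix i N12(2)] True by auto
      then show ?thesis using True Phi_ix[OF i True] by (simp add: Pj_comp)
    next
      case False
      then have "i = 1 \<or> i = 2" using i by auto
      then show ?thesis using False by (auto simp: Pj_comp)
    qed
  qed
  also have "\<dots> = (\<Sum>i\<in>{3..CARD('n)}. w $ ix i * F i w)"
    by (rule sum.mono_neutral_cong_right) auto
  also have "\<dots> = (\<Sum>j\<in>{1..CARD('n) - 2}. w $ ix (j + 2) * F (j + 2) w)"
  proof -
    have "{3..CARD('n)} = {1 + 2..(CARD('n) - 2) + 2}" using n2 by auto
    then show ?thesis by (simp only: sum.shift_bounds_cl_nat_ivl)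
  qed
  finally show ?thesis .
qed


lemma main_mc:
  shows "\<exists>V W F f C\<^sub>1 C\<^sub>2. open V \<and> p \<in> V \<and> V \<subseteq> U \<and> open W \<and> zmap ix m r ` V \<subseteq> W \<and>
      smooth_on W f \<and> (\<forall>i\<in>{1..CARD('n)}. smooth_on W (F i)) \<and>
      (\<forall>u\<in>V. \<forall>i\<in>{1..CARD('n)}. eb i u = \<bar>u $ ix 2\<bar> powr (- d) * F i (zmap ix m r u)) \<and>
      (\<forall>w\<in>W.
         F 1 w = - (\<Sum>\<alpha>\<in>{2..r}. dz ix (bidx m \<alpha> 1 - 2) f w) + C\<^sub>1 \<and>
         F 2 w = - (\<Sum>j\<in>{1..CARD('n) - 2}. w $ ix (j + 2) * dz ix j f w) - (d - 1) * f w + C\<^sub>2 \<and>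
         (\<forall>j\<in>{3..CARD('n)}. F j w = dz ix (j - 2) f w) \<and>
         (\<Sum>\<alpha>\<in>{1..r}. F (bidx m \<alpha> 1) w) = C\<^sub>1) \<and>
      (d \<noteq> 0 \<longrightarrow> C\<^sub>1 = 0)"
proof (intro exI conjI)
  show "open V" by (rule V_open)
  show "p \<in> V" by (rule pV)
  show "V \<subseteq> U" by (rule VU)
  show "open W" by (rule W_open)
  show "zmap ix m r ` V \<subseteq> W" by (rule zV)
  show "smooth_on W f" by (rule f_smooth)
  show "\<forall>i\<in>{1..CARD('n)}. smooth_on W (F i)" using TF_smooth[OF F_TF] by blast
  show "\<forall>u\<in>V. \<forall>i\<in>{1..CARD('n)}. eb i u = \<bar>u $ ix 2\<bar> powr (- d) * F i (zmap ix m r u)"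
    using eb_V by blast
  show "d \<noteq> 0 \<longrightarrow> C1 = 0" using C1_zero by blast
  show "\<forall>w\<in>W.
         F 1 w = - (\<Sum>\<alpha>\<in>{2..r}. dz ix (bidx m \<alpha> 1 - 2) f w) + C1 \<and>
         F 2 w = - (\<Sum>j\<in>{1..CARD('n) - 2}. w $ ix (j + 2) * dz ix j f w) - (d - 1) * f w + G a0 \<and>
         (\<forall>j\<in>{3..CARD('n)}. F j w = dz ix (j - 2) f w) \<and>
         (\<Sum>\<alpha>\<in>{1..r}. F (bidx m \<alpha> 1) w) = C1"
  proof (intro ballI conjI)
    fix w assume w: "w \<in> W"
    have ins: "{1..r} = insert 1 {2..r}" using r by auto
    have dz1: "dz ix (bidx m \<alpha> 1 - 2) f w = F (bidx m \<alpha> 1) w" if "\<alpha> \<in> {2..r}" for \<alpha>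
      using dz_f[OF w, of "bidx m \<alpha> 1"] b1N[of \<alpha>] b1ge3[OF that] that by auto
    have "(\<Sum>\<alpha>\<in>{1..r}. F (bidx m \<alpha> 1) w) = F 1 w + (\<Sum>\<alpha>\<in>{2..r}. F (bidx m \<alpha> 1) w)"
      unfolding ins by (simp add: sum.insert)
    moreover have "(\<Sum>\<alpha>\<in>{2..r}. dz ix (bidx m \<alpha> 1 - 2) f w) = (\<Sum>\<alpha>\<in>{2..r}. F (bidx m \<alpha> 1) w)"
      by (intro sum.cong refl dz1)
    ultimately show "F 1 w = - (\<Sum>\<alpha>\<in>{2..r}. dz ix (bidx m \<alpha> 1 - 2) f w) + C1"
      using F_sum[OF w] by simp
    show "(\<Sum>\<alpha>\<in>{1..r}. F (bidx m \<alpha> 1) w) = C1" by (rule F_sum[OF w])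
    show "F j w = dz ix (j - 2) f w" if "j \<in> {3..CARD('n)}" for j using dz_f[OF w that] by simp
    have dz2: "dz ix j f w = F (j + 2) w" if "j \<in> {1..CARD('n) - 2}" for j
      using dz_f[OF w, of "j + 2"] that n2 by auto
    have "(\<Sum>j\<in>{1..CARD('n) - 2}. w $ ix (j + 2) * dz ix j f w) = (\<Sum>j\<in>{1..CARD('n) - 2}. w $ ix (j + 2) * F (j + 2) w)"
      by (intro sum.cong refl) (simp add: dz2)
    also have "\<dots> = (\<Sum>k\<in>UNIV. Pj w $ k * Phi k w)" by (rule Pj_sum[symmetric])
    finally have "(\<Sum>j\<in>{1..CARD('n) - 2}. w $ ix (j + 2) * dz ix j f w) = (\<Sum>k\<in>UNIV. Pj w $ k * Phi k w)" .
    then show "F 2 w = - (\<Sum>j\<in>{1..CARD('n) - 2}. w $ ix (j + 2) * dz ix j f w) - (d - 1) * f w + G a0"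
      using G_const[OF w] by (simp add: G_def)
  qed
qed

end

theorem mainTheorem2:
  fixes ix :: "nat \<Rightarrow> 'n::finite"
    and U :: "(real^'n) set" and p :: "real^'n"
    and r :: nat and m :: "nat \<Rightarrow> nat"
    and eb :: "nat \<Rightarrow> real^'n \<Rightarrow> real" and d :: real
  assumes ix: "bij_betw ix {1..CARD('n)} UNIV"
    and r: "r \<ge> 1"
    and m_pos: "\<forall>\<alpha>\<in>{1..r}. m \<alpha> \<ge> 1"
    and m_sum: "(\<Sum>\<alpha>\<in>{1..r}. m \<alpha>) = CARD('n)"
    and m1: "m 1 \<ge> 2"
    and pU: "p \<in> U"
    and frob: "frobenius_coords ix U (hankel_metric m r eb) (\<lambda>l j k u. dh_c m r l j k)
                 (\<lambda>s u. dh_e m r s) (\<lambda>s u. u $ ix s) d"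
    and jordan: "\<forall>u\<in>U. (\<forall>\<alpha>\<in>{1..r}. m \<alpha> \<ge> 2 \<longrightarrow> u $ ix (bidx m \<alpha> 2) \<noteq> 0) \<and>
                 (\<forall>\<alpha>\<in>{1..r}. \<forall>\<beta>\<in>{1..r}. \<alpha> \<noteq> \<beta> \<longrightarrow> u $ ix (bidx m \<alpha> 1) \<noteq> u $ ix (bidx m \<beta> 1))"
  shows "\<exists>V W F f C\<^sub>1 C\<^sub>2. open V \<and> p \<in> V \<and> V \<subseteq> U \<and> open W \<and> zmap ix m r ` V \<subseteq> W \<and>
      smooth_on W f \<and> (\<forall>i\<in>{1..CARD('n)}. smooth_on W (F i)) \<and>
      (\<forall>u\<in>V. \<forall>i\<in>{1..CARD('n)}. eb i u = \<bar>u $ ix 2\<bar> powr (- d) * F i (zmap ix m r u)) \<and>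
      (\<forall>w\<in>W.
         F 1 w = - (\<Sum>\<alpha>\<in>{2..r}. dz ix (bidx m \<alpha> 1 - 2) f w) + C\<^sub>1 \<and>
         F 2 w = - (\<Sum>j\<in>{1..CARD('n) - 2}. w $ ix (j + 2) * dz ix j f w) - (d - 1) * f w + C\<^sub>2 \<and>
         (\<forall>j\<in>{3..CARD('n)}. F j w = dz ix (j - 2) f w) \<and>
         (\<Sum>\<alpha>\<in>{1..r}. F (bidx m \<alpha> 1) w) = C\<^sub>1) \<and>
      (d \<noteq> 0 \<longrightarrow> C\<^sub>1 = 0)"
proof -
  have bl: "blocks m r CARD('n)" using r m_pos m_sum by unfold_locales
  note fc = frob_cons[OF ix bl frob]
  have u2: "\<forall>u\<in>U. u $ ix 2 \<noteq> 0"
  proof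
    fix u assume "u \<in> U"
    then have "u $ ix (bidx m 1 2) \<noteq> 0" using jordan m1 r by auto
    moreover have "bidx m 1 2 = 2" by (simp add: bidx_def)
    ultimately show "u $ ix 2 \<noteq> 0" by simp
  qed
  interpret mc ix m r eb d U p
    by (unfold_locales) (use ix bl m1 pU fc u2 r m_pos m_sum in auto)
  show ?thesis by (rule main_mc)
qed

end
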